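(* Let $(\mathcal G_s)_{s\ge0}$ be a filtration. For $s=1,\dots,t$ let $w_s\in\{0,1\}$ and $u_s\in\mathbb R^{d+2}$ be $\mathcal G_{s-1}$-measurable with $\|u_s\|_2^2\le R$ where $R\ge1$, and let $d_s\in\{0,1\}$ be $\mathcal G_s$-measurable with $\mathbb E[d_s\mid\mathcal G_{s-1}]=\mu(u_s'\theta^* )$ for some $\theta^*\in\Theta$. Assume $\Theta\subset\mathbb R^{d+2}$ is convex with $\|\theta\|_2\le L$ for all $\theta\in\Theta$, and $\mu$ is differentiable with $\dot\mu(u_s'\theta)\ge l_1>0$ for all $\theta\in\Theta$ and all $s$. Let $\hat\theta\in\arg\min_{\theta\in\Theta}\sum_{s=1}^tw_s\,l_s(\theta)$ with $l_s(\theta)=m(u_s'\theta)-d_su_s'\theta$, $m'=\mu$, let $V=I+\sum_{s=1}^tw_su_su_s'$ and $N=\sum_{s=1}^tw_s$. Then for any $\Delta\in(0,1)$, with probability at least $1-\Delta$, $$\|\hat\theta-\theta^*\|_V\le\frac{2\sqrt{(d+2)\log\big(1+NR^2/(d+2)\big)+2\log(1/\Delta)}+2l_1L}{l_1},$$ where $\|v\|_V=\sqrt{v'Vv}$.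
   Context: In the paper this is applied with $w_s=\mathbf 1(i_s=i)$ (individual data of product $i$) or $w_s=\mathbf 1(i_s\in\mathcal N_j)$ (pooled data of a cluster whose products share the parameter $\theta^*$), $u_s=(x_s',p_s)'$, and $R=2+\overline p^2$. *)

theory Defs
  imports "HOL-Probability.Probability"
begin

definition outer :: "real^'n \<Rightarrow> real^'n^'n" where
  "outer u = (\<chi> i j. u $ i * u $ j)"

definition Vnorm :: "real^'n^'n \<Rightarrow> real^'n \<Rightarrow> real" where
  "Vnorm V v = sqrt (v \<bullet> (V *v v))"

end

theory Submission
  imports Defs
begin

lemma gauss1:
  fixes a K \<beta> :: real
  assumes a: "a > 0"
  shows "(\<integral>\<^sup>+y. ennreal (exp (K + \<beta>*y - a*y\<^sup>2/2)) \<partial>lborel)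
         = ennreal (exp (K + \<beta>\<^sup>2/(2*a)) * sqrt (2*pi/a))"
proof -
  define \<sigma> where "\<sigma> = 1 / sqrt a"
  have \<sigma>: "\<sigma> > 0" using a by (simp add: \<sigma>_def)
  have s2: "\<sigma>\<^sup>2 = 1/a" using a by (simp add: \<sigma>_def power_divide)
  have pt: "exp (K + \<beta>*y - a*y\<^sup>2/2) = exp (K + \<beta>\<^sup>2/(2*a)) * sqrt (2*pi/a) * normal_density (\<beta>/a) \<sigma> y" for y
  proof -
    have "sqrt (2*pi/a) * (1 / sqrt (2 * pi * \<sigma>\<^sup>2)) = 1" using a s2 by (simp add: real_sqrt_divide)
    moreover have "exp (K + \<beta>*y - a*y\<^sup>2/2) = exp (K + \<beta>\<^sup>2/(2*a)) * exp (-(y - \<beta>/a)\<^sup>2/ (2 * \<sigma>\<^sup>2))"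
    proof -
      have "K + \<beta>*y - a*y\<^sup>2/2 = (K + \<beta>\<^sup>2/(2*a)) + (-(y - \<beta>/a)\<^sup>2/ (2 * \<sigma>\<^sup>2))"
      proof -
        have e1: "-(y - \<beta>/a)\<^sup>2/ (2 * \<sigma>\<^sup>2) = -a*(y - \<beta>/a)\<^sup>2/2" unfolding s2 using a by (simp add: field_simps)
        have e2: "K + \<beta>*y - a*y\<^sup>2/2 = (K + \<beta>\<^sup>2/(2*a)) + (-a*(y - \<beta>/a)\<^sup>2/2)"
          using a by (simp add: field_simps power2_eq_square)
        show ?thesis unfolding e1 by (rule e2)
      qed
      then have "exp (K + \<beta>*y - a*y\<^sup>2/2) = exp ((K + \<beta>\<^sup>2/(2*a)) + (-(y - \<beta>/a)\<^sup>2/ (2 * \<sigma>\<^sup>2)))" by (rule arg_cong)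
      then show ?thesis by (simp only: exp_add)
    qed
    ultimately show ?thesis unfolding normal_density_def
      by (metis (no_types, lifting) mult.assoc mult.commute mult.left_neutral)
  qed
  have "(\<integral>\<^sup>+y. ennreal (exp (K + \<beta>*y - a*y\<^sup>2/2)) \<partial>lborel)
       = (\<integral>\<^sup>+y. ennreal (exp (K + \<beta>\<^sup>2/(2*a)) * sqrt (2*pi/a)) * ennreal (normal_density (\<beta>/a) \<sigma> y) \<partial>lborel)"
    by (intro nn_integral_cong) (simp only: pt, rule ennreal_mult, simp_all add: a less_imp_le)
  also have "\<dots> = ennreal (exp (K + \<beta>\<^sup>2/(2*a)) * sqrt (2*pi/a)) * (\<integral>\<^sup>+y. ennreal (normal_density (\<beta>/a) \<sigma> y) \<partial>lborel)"
    by (rule nn_integral_cmult) simp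
  also have "(\<integral>\<^sup>+y. ennreal (normal_density (\<beta>/a) \<sigma> y) \<partial>lborel) = 1"
  proof -
    have "(\<integral>\<^sup>+y. ennreal (normal_density (\<beta>/a) \<sigma> y) \<partial>lborel) = ennreal (\<integral>y. normal_density (\<beta>/a) \<sigma> y \<partial>lborel)"
      by (rule nn_integral_eq_integral) (auto intro: integrable_normal_density[OF \<sigma>])
    also have "\<dots> = 1" using integral_normal_density[OF \<sigma>] by simp
    finally show ?thesis .
  qed
  finally show ?thesis by simp
qed


definition Lf :: "'n set \<Rightarrow> ('n \<Rightarrow> real) \<Rightarrow> ('n \<Rightarrow> real) \<Rightarrow> real" where
  "Lf I b y = (\<Sum>i\<in>I. b i * y i)"
definition Qf :: "'n set \<Rightarrow> ('n \<Rightarrow> 'n \<Rightarrow> real) \<Rightarrow> ('n \<Rightarrow> real) \<Rightarrow> real" where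
  "Qf I q y = (\<Sum>i\<in>I. \<Sum>j\<in>I. q i j * y i * y j)"

lemma Lf_upd:
  assumes "finite I" "i \<notin> I"
  shows "Lf (insert i I) b (x(i:=z)) = b i * z + Lf I b x"
proof -
  have "(\<Sum>j\<in>I. b j * (x(i:=z)) j) = (\<Sum>j\<in>I. b j * x j)"
    using assms by (intro sum.cong) auto
  then show ?thesis using assms by (simp add: Lf_def)
qed

lemma Qf_upd:
  assumes "finite I" "i \<notin> I" and sym: "\<forall>j\<in>insert i I. \<forall>l\<in>insert i I. q j l = q l j"
  shows "Qf (insert i I) q (x(i:=z)) = q i i * z\<^sup>2 + 2*z*(\<Sum>j\<in>I. q i j * x j) + Qf I q x"
proof -
  let ?y = "x(i:=z)"
  have yi: "?y i = z" by simp
  have yj: "\<And>j. j \<in> I \<Longrightarrow> ?y j = x j" using assms by auto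
  have row: "(\<Sum>l\<in>insert i I. q j l * ?y j * ?y l) = q j i * ?y j * z + (\<Sum>l\<in>I. q j l * ?y j * x l)" for j
  proof -
    have "(\<Sum>l\<in>insert i I. q j l * ?y j * ?y l) = q j i * ?y j * ?y i + (\<Sum>l\<in>I. q j l * ?y j * ?y l)"
      using assms(1,2) by (rule sum.insert)
    also have "(\<Sum>l\<in>I. q j l * ?y j * ?y l) = (\<Sum>l\<in>I. q j l * ?y j * x l)"
      using yj by (intro sum.cong) auto
    finally show ?thesis by simp
  qed
  have "Qf (insert i I) q ?y = (\<Sum>j\<in>insert i I. q j i * ?y j * z + (\<Sum>l\<in>I. q j l * ?y j * x l))"
    unfolding Qf_def by (rule sum.cong[OF refl row])
  also have "\<dots> = (q i i * z * z + (\<Sum>l\<in>I. q i l * z * x l)) + (\<Sum>j\<in>I. q j i * ?y j * z + (\<Sum>l\<in>I. q j l * ?y j * x l))"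
    using assms(1,2) by (subst sum.insert) auto
  also have "(\<Sum>j\<in>I. q j i * ?y j * z + (\<Sum>l\<in>I. q j l * ?y j * x l)) = (\<Sum>j\<in>I. q i j * x j * z) + Qf I q x"
  proof -
    have qs: "\<And>j. j \<in> I \<Longrightarrow> q j i = q i j" using sym by blast
    have "(\<Sum>j\<in>I. q j i * ?y j * z) = (\<Sum>j\<in>I. q i j * x j * z)"
      using qs yj by (intro sum.cong) auto
    moreover have "(\<Sum>j\<in>I. (\<Sum>l\<in>I. q j l * ?y j * x l)) = Qf I q x"
      unfolding Qf_def using yj by (intro sum.cong) auto
    ultimately show ?thesis by (simp add: sum.distrib)
  qed
  also have "(\<Sum>l\<in>I. q i l * z * x l) = z * (\<Sum>j\<in>I. q i j * x j)"
    by (simp add: sum_distrib_left mult_ac)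
  also have "(\<Sum>j\<in>I. q i j * x j * z) = z * (\<Sum>j\<in>I. q i j * x j)"
    by (simp add: sum_distrib_left mult_ac)
  finally have h: "Qf (insert i I) q ?y = q i i * z * z + z * (\<Sum>j\<in>I. q i j * x j) + (z * (\<Sum>j\<in>I. q i j * x j) + Qf I q x)" .
  show ?thesis unfolding h by (simp add: power2_eq_square algebra_simps)
qed

lemma Qf_unit:
  assumes "finite I" "j \<in> I"
  shows "Qf I q (\<lambda>l. if l = j then 1 else 0) = q j j"
proof -
  have e: "\<And>i l. q i l * (if i = j then 1 else 0) * (if l = j then 1 else 0) = (if i = j \<and> l = j then q j j else 0)"
    by auto
  have "\<And>i. (\<Sum>l\<in>I. q i l * (if i = j then 1 else 0) * (if l = j then 1 else 0)) = (if i = j then q j j else 0)"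
    using assms unfolding e by (cases "i = j") auto
  then show ?thesis unfolding Qf_def using assms by (simp add: sum.delta)
qed

lemma sq_unit:
  assumes "finite I" "j \<in> I"
  shows "(\<Sum>l\<in>I. ((\<lambda>l. if l = j then 1 else 0::real) l)\<^sup>2) = 1"
proof -
  have "(\<Sum>l\<in>I. ((\<lambda>l. if l = j then 1 else 0::real) l)\<^sup>2) = (\<Sum>l\<in>I. if l = j then 1 else 0)"
    by (intro sum.cong) auto
  then show ?thesis using assms by simp
qed

lemma meas_Lf: "(\<lambda>y. Lf I b y) \<in> borel_measurable (PiM I (\<lambda>_. lborel))"
  unfolding Lf_def
proof (rule borel_measurable_sum)
  fix j assume "j \<in> I"
  then show "(\<lambda>y. b j * y j) \<in> borel_measurable (PiM I (\<lambda>_. lborel))" by measurable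
qed

lemma meas_Qf: "(\<lambda>y. Qf I q y) \<in> borel_measurable (PiM I (\<lambda>_. lborel))"
  unfolding Qf_def
proof (rule borel_measurable_sum, rule borel_measurable_sum)
  fix j l assume "j \<in> I" "l \<in> I"
  then show "(\<lambda>y. q j l * y j * y l) \<in> borel_measurable (PiM I (\<lambda>_. lborel))" by measurable
qed

lemma Lf_upd_self:
  assumes "finite I" "i \<notin> I"
  shows "Lf (insert i I) b y = b i * y i + Lf I b y"
  using Lf_upd[OF assms, of b y "y i"] by simp

lemma Qf_upd_self:
  assumes "finite I" "i \<notin> I" and sym: "\<forall>j\<in>insert i I. \<forall>l\<in>insert i I. q j l = q l j"
  shows "Qf (insert i I) q y = q i i * (y i)\<^sup>2 + 2*(y i)*(\<Sum>j\<in>I. q i j * y j) + Qf I q y"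
  using Qf_upd[OF assms, of y "y i"] by simp

lemma Qf_schur:
  "Qf I (\<lambda>j l. q j l - q i j * q i l / a) y = Qf I q y - (\<Sum>j\<in>I. q i j * y j)\<^sup>2 / a"
proof -
  have "Qf I (\<lambda>j l. q j l - q i j * q i l / a) y = Qf I q y - (\<Sum>j\<in>I. \<Sum>l\<in>I. (q i j * y j) * (q i l * y l)) / a"
    unfolding Qf_def by (simp add: sum_subtractf sum_divide_distrib algebra_simps)
  also have "(\<Sum>j\<in>I. \<Sum>l\<in>I. (q i j * y j) * (q i l * y l)) = (\<Sum>j\<in>I. q i j * y j)\<^sup>2"
    by (simp add: power2_eq_square sum_product)
  finally show ?thesis .
qed

lemma Lf_schur:
  "Lf I (\<lambda>j. b j - bi * q i j / a) y = Lf I b y - bi * (\<Sum>j\<in>I. q i j * y j) / a"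
  unfolding Lf_def by (simp add: sum_subtractf sum_divide_distrib sum_distrib_left algebra_simps)


lemma gauss_lb:
  fixes I :: "'n set" and \<alpha> :: real
  assumes fin: "finite I" and \<alpha>: "\<alpha> > 0"
  shows "(\<forall>j\<in>I. \<forall>l\<in>I. q j l = q l j) \<Longrightarrow> (\<forall>y. \<alpha> * (\<Sum>j\<in>I. (y j)\<^sup>2) \<le> Qf I q y) \<Longrightarrow>
    ennreal (exp (k + Lf I b y0 - Qf I q y0 / 2) * (\<Prod>j\<in>I. sqrt (2*pi / q j j)))
      \<le> (\<integral>\<^sup>+ y. ennreal (exp (k + Lf I b y - Qf I q y / 2)) \<partial>(PiM I (\<lambda>_. lborel)))"
  using fin
proof (induction I arbitrary: q b k y0 rule: finite_induct)
  case empty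
  interpret product_sigma_finite "\<lambda>_. lborel" by standard
  show ?case by (simp add: Lf_def Qf_def PiM_empty)
next
  case (insert i I q b k y0)
  interpret product_sigma_finite "\<lambda>_. lborel" by standard
  note sym = insert.prems(1) and coer = insert.prems(2)
  define a where "a = q i i"
  have a_ge: "\<alpha> \<le> a"
    using coer[rule_format, of "\<lambda>l. if l = i then 1 else 0"]
      Qf_unit[of "insert i I" i q] sq_unit[of "insert i I" i] insert.hyps(1)
    by (simp add: a_def)
  have a: "a > 0" using a_ge \<alpha> by simp
  have qpos: "0 < q j j" if "j \<in> insert i I" for j
  proof -
    have "\<alpha> \<le> q j j"
      using coer[rule_format, of "\<lambda>l. if l = j then 1 else 0"]
        Qf_unit[of "insert i I" j q] sq_unit[of "insert i I" j] insert.hyps(1) that by simp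
    then show ?thesis using \<alpha> by simp
  qed
  have pn: "0 \<le> (\<Prod>j\<in>I. sqrt (2*pi / q j j))"
  proof (intro prod_nonneg)
    fix j assume "j \<in> I"
    then have "0 < q j j" using qpos by blast
    then show "0 \<le> sqrt (2*pi / q j j)" by simp
  qed
  define c where "c x = (\<Sum>j\<in>I. q i j * x j)" for x :: "'n \<Rightarrow> real"
  define q' where "q' = (\<lambda>j l. q j l - q i j * q i l / a)"
  define b' where "b' = (\<lambda>j. b j - b i * q i j / a)"
  define k' where "k' = k + (b i)\<^sup>2 / (2*a)"
  have Q': "Qf I q' y = Qf I q y - (c y)\<^sup>2 / a" for y
    unfolding q'_def c_def by (rule Qf_schur)
  have L': "Lf I b' y = Lf I b y - b i * c y / a" for y
    unfolding b'_def c_def by (rule Lf_schur)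
  have sym': "\<forall>j\<in>I. \<forall>l\<in>I. q' j l = q' l j"
  proof (intro ballI)
    fix j l assume "j \<in> I" "l \<in> I"
    then have "q j l = q l j" using sym by blast
    then show "q' j l = q' l j" unfolding q'_def by (simp add: mult.commute)
  qed
  have coer': "\<forall>y. \<alpha> * (\<Sum>j\<in>I. (y j)\<^sup>2) \<le> Qf I q' y"
  proof
    fix y :: "'n \<Rightarrow> real"
    define z where "z = - c y / a"
    have "Qf (insert i I) q (y(i:=z)) = a * z\<^sup>2 + 2*z*c y + Qf I q y"
      using Qf_upd[OF insert.hyps(1,2) sym] unfolding a_def c_def by simp
    also have "\<dots> = Qf I q' y" unfolding Q' z_def using a
      by (simp add: field_simps power2_eq_square)
    finally have e: "Qf (insert i I) q (y(i:=z)) = Qf I q' y" .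
    have "(\<Sum>j\<in>insert i I. ((y(i:=z)) j)\<^sup>2) = z\<^sup>2 + (\<Sum>j\<in>I. (y j)\<^sup>2)"
    proof -
      have "(\<Sum>j\<in>I. ((y(i:=z)) j)\<^sup>2) = (\<Sum>j\<in>I. (y j)\<^sup>2)"
        using insert.hyps(2) by (intro sum.cong) auto
      then show ?thesis using insert.hyps(1,2) by simp
    qed
    then have "\<alpha> * (\<Sum>j\<in>I. (y j)\<^sup>2) \<le> \<alpha> * (\<Sum>j\<in>insert i I. ((y(i:=z)) j)\<^sup>2)"
      using \<alpha> by (simp add: mult_left_mono)
    also have "\<dots> \<le> Qf (insert i I) q (y(i:=z))" using coer by blast
    finally show "\<alpha> * (\<Sum>j\<in>I. (y j)\<^sup>2) \<le> Qf I q' y" using e by simp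
  qed
  have IH: "ennreal (exp (k' + Lf I b' y0 - Qf I q' y0 / 2) * (\<Prod>j\<in>I. sqrt (2*pi / q' j j)))
      \<le> (\<integral>\<^sup>+ y. ennreal (exp (k' + Lf I b' y - Qf I q' y / 2)) \<partial>(PiM I (\<lambda>_. lborel)))"
    by (rule insert.IH[OF sym' coer'])
  have expo: "k + Lf (insert i I) b (x(i:=z)) - Qf (insert i I) q (x(i:=z)) / 2
      = (k + Lf I b x - Qf I q x / 2) + (b i - c x) * z - a * z\<^sup>2 / 2" for x z
    using Lf_upd[OF insert.hyps(1,2)] Qf_upd[OF insert.hyps(1,2) sym] unfolding a_def c_def
    by (simp add: algebra_simps)
  have expo2: "(k + Lf I b x - Qf I q x / 2) + (b i - c x)\<^sup>2 / (2*a) = k' + Lf I b' x - Qf I q' x / 2" for x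
    unfolding L' Q' k'_def using a by (simp add: field_simps power2_eq_square)
  have meas: "(\<lambda>y. ennreal (exp (k + Lf (insert i I) b y - Qf (insert i I) q y / 2)))
      \<in> borel_measurable (PiM (insert i I) (\<lambda>_. lborel))"
    using meas_Lf[of "insert i I" b] meas_Qf[of "insert i I" q] by measurable
  have "(\<integral>\<^sup>+ y. ennreal (exp (k + Lf (insert i I) b y - Qf (insert i I) q y / 2)) \<partial>(PiM (insert i I) (\<lambda>_. lborel)))
      = (\<integral>\<^sup>+ x. (\<integral>\<^sup>+ z. ennreal (exp (k + Lf (insert i I) b (x(i:=z)) - Qf (insert i I) q (x(i:=z)) / 2)) \<partial>lborel) \<partial>(PiM I (\<lambda>_. lborel)))"
    by (rule product_nn_integral_insert[OF insert.hyps(1,2) meas])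
  also have "\<dots> = (\<integral>\<^sup>+ x. ennreal (sqrt (2*pi/a)) * ennreal (exp (k' + Lf I b' x - Qf I q' x / 2)) \<partial>(PiM I (\<lambda>_. lborel)))"
  proof (rule nn_integral_cong)
    fix x :: "'n \<Rightarrow> real"
    have "(\<integral>\<^sup>+ z. ennreal (exp (k + Lf (insert i I) b (x(i:=z)) - Qf (insert i I) q (x(i:=z)) / 2)) \<partial>lborel)
        = (\<integral>\<^sup>+ z. ennreal (exp ((k + Lf I b x - Qf I q x / 2) + (b i - c x) * z - a * z\<^sup>2 / 2)) \<partial>lborel)"
      by (simp only: expo)
    also have "\<dots> = ennreal (exp ((k + Lf I b x - Qf I q x / 2) + (b i - c x)\<^sup>2 / (2*a)) * sqrt (2*pi/a))"
      by (rule gauss1[OF a])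
    also have "\<dots> = ennreal (sqrt (2*pi/a)) * ennreal (exp (k' + Lf I b' x - Qf I q' x / 2))"
      unfolding expo2 using a by (simp add: ennreal_mult[symmetric] mult.commute)
    finally show "(\<integral>\<^sup>+ z. ennreal (exp (k + Lf (insert i I) b (x(i:=z)) - Qf (insert i I) q (x(i:=z)) / 2)) \<partial>lborel)
        = ennreal (sqrt (2*pi/a)) * ennreal (exp (k' + Lf I b' x - Qf I q' x / 2))" .
  qed
  also have "\<dots> = ennreal (sqrt (2*pi/a)) * (\<integral>\<^sup>+ x. ennreal (exp (k' + Lf I b' x - Qf I q' x / 2)) \<partial>(PiM I (\<lambda>_. lborel)))"
    by (rule nn_integral_cmult) (use meas_Lf[of I b'] meas_Qf[of I q'] in measurable)
  finally have int_eq: "(\<integral>\<^sup>+ y. ennreal (exp (k + Lf (insert i I) b y - Qf (insert i I) q y / 2)) \<partial>(PiM (insert i I) (\<lambda>_. lborel)))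
      = ennreal (sqrt (2*pi/a)) * (\<integral>\<^sup>+ x. ennreal (exp (k' + Lf I b' x - Qf I q' x / 2)) \<partial>(PiM I (\<lambda>_. lborel)))" .
  have e1: "exp (k + Lf (insert i I) b y0 - Qf (insert i I) q y0 / 2) \<le> exp (k' + Lf I b' y0 - Qf I q' y0 / 2)"
  proof -
    have "k + Lf (insert i I) b y0 - Qf (insert i I) q y0 / 2
        = (k + Lf I b y0 - Qf I q y0 / 2) + (b i - c y0) * y0 i - a * (y0 i)\<^sup>2 / 2"
      using expo[of y0 "y0 i"] by simp
    also have "\<dots> \<le> (k + Lf I b y0 - Qf I q y0 / 2) + (b i - c y0)\<^sup>2 / (2*a)"
    proof -
      have "0 \<le> (a * y0 i - (b i - c y0))\<^sup>2 / (2*a)" using a by simp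
      then show ?thesis using a by (simp add: field_simps power2_eq_square)
    qed
    finally show ?thesis unfolding expo2 by simp
  qed
  have e2: "(\<Prod>j\<in>I. sqrt (2*pi / q j j)) \<le> (\<Prod>j\<in>I. sqrt (2*pi / q' j j))"
  proof (rule prod_mono)
    fix j assume j: "j \<in> I"
    have "\<alpha> \<le> q' j j"
      using coer'[rule_format, of "\<lambda>l. if l = j then 1 else 0"]
        Qf_unit[OF insert.hyps(1) j, of q'] sq_unit[OF insert.hyps(1) j] by simp
    then have pos: "0 < q' j j" using \<alpha> by simp
    have "q' j j \<le> q j j" unfolding q'_def using a by (simp add: power2_eq_square[symmetric])
    then have "2*pi / q j j \<le> 2*pi / q' j j" using pos by (intro divide_left_mono) auto
    then show "0 \<le> sqrt (2*pi / q j j) \<and> sqrt (2*pi / q j j) \<le> sqrt (2*pi / q' j j)"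
      using pos \<open>q' j j \<le> q j j\<close> by auto
  qed
  have "exp (k + Lf (insert i I) b y0 - Qf (insert i I) q y0 / 2) * (\<Prod>j\<in>insert i I. sqrt (2*pi / q j j))
      = sqrt (2*pi/a) * (exp (k + Lf (insert i I) b y0 - Qf (insert i I) q y0 / 2) * (\<Prod>j\<in>I. sqrt (2*pi / q j j)))"
    using insert.hyps(1,2) by (simp add: a_def)
  also have "\<dots> \<le> sqrt (2*pi/a) * (exp (k' + Lf I b' y0 - Qf I q' y0 / 2) * (\<Prod>j\<in>I. sqrt (2*pi / q' j j)))"
    by (intro mult_left_mono mult_mono e1 e2) (use pn a in auto)
  finally have "ennreal (exp (k + Lf (insert i I) b y0 - Qf (insert i I) q y0 / 2) * (\<Prod>j\<in>insert i I. sqrt (2*pi / q j j)))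
      \<le> ennreal (sqrt (2*pi/a)) * ennreal (exp (k' + Lf I b' y0 - Qf I q' y0 / 2) * (\<Prod>j\<in>I. sqrt (2*pi / q' j j)))"
    using a by (simp add: ennreal_mult'[symmetric] ennreal_leI)
  also have "\<dots> \<le> ennreal (sqrt (2*pi/a)) * (\<integral>\<^sup>+ x. ennreal (exp (k' + Lf I b' x - Qf I q' x / 2)) \<partial>(PiM I (\<lambda>_. lborel)))"
    by (intro mult_left_mono IH) auto
  finally show ?case unfolding int_eq .
qed


lemma bern_hoeff:
  fixes c p :: real
  assumes p0: "0 \<le> p" and p1: "p \<le> 1"
  shows "exp (-c*p) * (1 + p*(exp c - 1)) \<le> exp (c\<^sup>2/8)"
proof -
  have key: "exp (-h*r) * (1 + r*(exp h - 1)) \<le> exp (h\<^sup>2/8)" if h: "h \<ge> 0" and r: "0 \<le> r" "r \<le> 1" for h r :: real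
  proof -
    have pos: "1 + r*(exp h - 1) > 0"
      using h r by (intro add_pos_nonneg mult_nonneg_nonneg) auto
    have "-h * r + ln (1 + r * (exp h - 1)) \<le> h\<^sup>2 / 8"
      using Hoeffdings_lemma_aux[of h r] h r by simp
    then have "exp (-h * r + ln (1 + r * (exp h - 1))) \<le> exp (h\<^sup>2 / 8)" by simp
    moreover have "exp (-h * r) * (1 + r * (exp h - 1)) = exp (-h * r + ln (1 + r * (exp h - 1)))"
      using pos by (simp only: exp_add exp_ln)
    ultimately show ?thesis by simp
  qed
  show ?thesis
  proof (cases "c \<ge> 0")
    case True then show ?thesis using key[OF True p0 p1] by simp
  next
    case False
    have e: "exp (-(-c)*(1-p)) * (1 + (1-p)*(exp (-c) - 1)) = exp (-c*p) * (1 + p*(exp c - 1))"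
    proof -
      have "exp (-(-c)*(1-p)) = exp c * exp (-c*p)" by (simp add: exp_add[symmetric] algebra_simps)
      moreover have "exp c * (1 + (1-p)*(exp (-c) - 1)) = 1 + p*(exp c - 1)"
        by (simp add: algebra_simps exp_minus_inverse)
      ultimately show ?thesis by (simp add: mult_ac)
    qed
    show ?thesis using key[of "-c" "1-p"] False p0 p1 unfolding e by simp
  qed
qed

lemma strong_conv_1d:
  fixes m \<mu> :: "real \<Rightarrow> real" and a b l1 :: real
  assumes m: "\<And>z. (m has_real_derivative \<mu> z) (at z)"
    and \<mu>d: "\<And>z. \<mu> differentiable (at z)"
    and dlow: "\<And>r. 0 \<le> r \<Longrightarrow> r \<le> 1 \<Longrightarrow> deriv \<mu> (a + r*b) \<ge> l1"
  shows "m (a+b) - m a - \<mu> a * b \<ge> l1 * b\<^sup>2 / 2"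
proof -
  define \<phi> where "\<phi> r = m (a + r*b) - r * (\<mu> a * b) - l1 * r\<^sup>2 * b\<^sup>2 / 2" for r
  have D\<mu>: "DERIV \<mu> z :> deriv \<mu> z" for z using \<mu>d DERIV_deriv_iff_real_differentiable by blast
  have D\<psi>: "DERIV (\<lambda>\<rho>. \<mu> (a + \<rho>*b)) \<rho> :> deriv \<mu> (a + \<rho>*b) * b" for \<rho>
    by (rule DERIV_chain2[OF D\<mu>]) (auto intro!: derivative_eq_intros)
  have D\<phi>: "DERIV \<phi> r :> \<mu> (a + r*b) * b - \<mu> a * b - l1 * r * b\<^sup>2" for r
    unfolding \<phi>_def
    by (rule derivative_eq_intros DERIV_chain2[OF m] refl | simp)+
  have nonneg: "\<mu> (a + r*b) * b - \<mu> a * b - l1 * r * b\<^sup>2 \<ge> 0" if r: "0 \<le> r" "r \<le> 1" for r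
  proof (cases "r = 0")
    case True then show ?thesis by simp
  next
    case False
    then have "0 < r" using r by simp
    from MVT2[OF this, of "\<lambda>\<rho>. \<mu> (a + \<rho>*b)" "\<lambda>\<rho>. deriv \<mu> (a + \<rho>*b) * b"] D\<psi>
    obtain z where z: "0 < z" "z < r" "\<mu> (a + r*b) - \<mu> (a + 0*b) = (r - 0) * (deriv \<mu> (a + z*b) * b)"
      by blast
    have "l1 \<le> deriv \<mu> (a + z*b)" using dlow z r by simp
    then have "r * b\<^sup>2 * l1 \<le> r * b\<^sup>2 * deriv \<mu> (a + z*b)" using r by (intro mult_left_mono) auto
    moreover have "(\<mu> (a + r*b) - \<mu> a) * b = r * b\<^sup>2 * deriv \<mu> (a + z*b)"
      using z(3) by (simp add: power2_eq_square algebra_simps)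
    ultimately show ?thesis by (simp add: algebra_simps)
  qed
  have "\<phi> 0 \<le> \<phi> 1"
  proof (rule DERIV_nonneg_imp_nondecreasing[of 0 1 \<phi>])
    fix x :: real assume "0 \<le> x" "x \<le> 1"
    then show "\<exists>y. DERIV \<phi> x :> y \<and> y \<ge> 0" using D\<phi>[of x] nonneg[of x] by blast
  qed simp
  then show ?thesis unfolding \<phi>_def by simp
qed


lemma bounded_integrable:
  assumes "finite_measure M" "f \<in> borel_measurable M" "\<And>x. x \<in> space M \<Longrightarrow> \<bar>f x\<bar> \<le> (C::real)"
  shows "integrable M f"
proof -
  interpret finite_measure M by fact
  show ?thesis
    by (rule integrable_const_bound[where B=C]) (use assms in auto)
qed

lemma mart:
  fixes M :: "'a measure" and G :: "nat \<Rightarrow> 'a measure" and c dd p :: "nat \<Rightarrow> 'a \<Rightarrow> real"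
  assumes P: "prob_space M"
    and sub: "\<And>s. subalgebra M (G s)"
    and mono: "\<And>s. sets (G s) \<subseteq> sets (G (Suc s))"
    and c_meas: "\<And>s. s \<in> {1..t} \<Longrightarrow> c s \<in> borel_measurable (G (s - 1))"
    and c_bnd: "\<And>s x. s \<in> {1..t} \<Longrightarrow> x \<in> space M \<Longrightarrow> \<bar>c s x\<bar> \<le> B"
    and d_meas: "\<And>s. s \<in> {1..t} \<Longrightarrow> dd s \<in> borel_measurable (G s)"
    and d_01: "\<And>s x. s \<in> {1..t} \<Longrightarrow> x \<in> space M \<Longrightarrow> dd s x \<in> {0,1}"
    and p_meas: "\<And>s. s \<in> {1..t} \<Longrightarrow> p s \<in> borel_measurable (G (s - 1))"
    and p_bnd: "\<And>s x. s \<in> {1..t} \<Longrightarrow> x \<in> space M \<Longrightarrow> \<bar>p s x\<bar> \<le> K"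
    and cond: "\<And>s. s \<in> {1..t} \<Longrightarrow> AE x in M. real_cond_exp M (G (s - 1)) (dd s) x = p s x"
  shows "k \<le> t \<Longrightarrow> integrable M (\<lambda>x. exp (\<Sum>s\<in>{1..k}. c s x * (dd s x - p s x) - (c s x)\<^sup>2/8))
     \<and> (\<integral>x. exp (\<Sum>s\<in>{1..k}. c s x * (dd s x - p s x) - (c s x)\<^sup>2/8) \<partial>M) \<le> 1"
proof (induction k)
  interpret prob_space M by fact
  case 0
  then show ?case by (simp add: prob_space)
next
  interpret prob_space M by fact
  case (Suc k)
  define E where "E k x = exp (\<Sum>s\<in>{1..k}. c s x * (dd s x - p s x) - (c s x)\<^sup>2/8)" for k x
  define s where "s = Suc k"
  have s: "s \<in> {1..t}" "s - 1 = k" using Suc.prems by (auto simp: s_def)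
  have IH: "integrable M (E k)" "(\<integral>x. E k x \<partial>M) \<le> 1"
    using Suc.IH Suc.prems unfolding E_def by auto
  have sets_le: "sets (G a) \<subseteq> sets (G b)" if "a \<le> b" for a b
    using lift_Suc_mono_le[of "\<lambda>s. sets (G s)", OF mono that] .
  have meas_le: "f \<in> borel_measurable (G b)" if "a \<le> b" "f \<in> borel_measurable (G a)" for a b and f :: "'a \<Rightarrow> real"
  proof -
    have "subalgebra (G b) (G a)"
      using sets_le[OF that(1)] sub[of a] sub[of b] unfolding subalgebra_def by auto
    then show ?thesis using measurable_from_subalg that(2) by blast
  qed
  have toM: "f \<in> borel_measurable M" if "f \<in> borel_measurable (G a)" for a and f :: "'a \<Rightarrow> real"
    using measurable_from_subalg[OF sub that] .
  have Emeas: "E k \<in> borel_measurable (G k)"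
  proof -
  have "(\<lambda>x. \<Sum>s\<in>{1..k}. c s x * (dd s x - p s x) - (c s x)\<^sup>2/8) \<in> borel_measurable (G k)"
  proof (rule borel_measurable_sum)
    fix r assume r: "r \<in> {1..k}"
    then have rt: "r \<in> {1..t}" using Suc.prems by auto
    have [measurable]: "c r \<in> borel_measurable (G k)" using r by (intro meas_le[OF _ c_meas[OF rt]]) auto
    have [measurable]: "dd r \<in> borel_measurable (G k)" using r by (intro meas_le[OF _ d_meas[OF rt]]) auto
    have [measurable]: "p r \<in> borel_measurable (G k)" using r by (intro meas_le[OF _ p_meas[OF rt]]) auto
    show "(\<lambda>x. c r x * (dd r x - p r x) - (c r x)\<^sup>2 / 8) \<in> borel_measurable (G k)" by measurable
  qed
  then show ?thesis unfolding E_def by measurable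
  qed
  have [measurable]: "c s \<in> borel_measurable (G k)" "p s \<in> borel_measurable (G k)"
    using c_meas[OF s(1)] p_meas[OF s(1)] s(2) by auto
  have [measurable]: "dd s \<in> borel_measurable M" using toM[OF d_meas[OF s(1)]] .
  have Epos: "E j x > 0" for j x unfolding E_def by simp
  have Ebnd: "E k x \<le> exp (real t * (\<bar>B\<bar> * (1 + \<bar>K\<bar>)))" if x: "x \<in> space M" for x
  proof -
    have "(\<Sum>r\<in>{1..k}. c r x * (dd r x - p r x) - (c r x)\<^sup>2/8) \<le> (\<Sum>r\<in>{1..k}. \<bar>B\<bar> * (1 + \<bar>K\<bar>))"
    proof (rule sum_mono)
      fix r assume r: "r \<in> {1..k}"
      then have rt: "r \<in> {1..t}" using Suc.prems by auto
      have "c r x * (dd r x - p r x) \<le> \<bar>c r x\<bar> * \<bar>dd r x - p r x\<bar>" by (simp add: abs_mult[symmetric])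
      also have "\<dots> \<le> \<bar>B\<bar> * (1 + \<bar>K\<bar>)"
      proof (rule mult_mono)
        show "\<bar>c r x\<bar> \<le> \<bar>B\<bar>" using c_bnd[OF rt x] by simp
        have "\<bar>dd r x\<bar> \<le> 1" using d_01[OF rt x] by auto
        then show "\<bar>dd r x - p r x\<bar> \<le> 1 + \<bar>K\<bar>" using p_bnd[OF rt x] by simp
      qed auto
      finally show "c r x * (dd r x - p r x) - (c r x)\<^sup>2/8 \<le> \<bar>B\<bar> * (1 + \<bar>K\<bar>)"
        using zero_le_power2[of "c r x"] by linarith
    qed
    also have "\<dots> = real k * (\<bar>B\<bar> * (1 + \<bar>K\<bar>))" by simp
    also have "\<dots> \<le> real t * (\<bar>B\<bar> * (1 + \<bar>K\<bar>))"
      using Suc.prems by (intro mult_right_mono) auto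
    finally show ?thesis unfolding E_def by simp
  qed
  define CE where "CE = exp (real t * (\<bar>B\<bar> * (1 + \<bar>K\<bar>)))"
  define F where "F x = E k x * exp (-(c s x)\<^sup>2/8) * exp (-(c s x) * p s x)" for x
  have Fmeas: "F \<in> borel_measurable (G k)" unfolding F_def using Emeas by measurable
  have Fbnd: "\<bar>F x\<bar> \<le> CE * exp (\<bar>B\<bar> * \<bar>K\<bar>)" if x: "x \<in> space M" for x
  proof -
    have "\<bar>F x\<bar> = E k x * exp (-(c s x)\<^sup>2/8) * exp (-(c s x) * p s x)"
      unfolding F_def using Epos[of k x] by (simp add: abs_mult)
    also have "\<dots> \<le> CE * 1 * exp (\<bar>B\<bar> * \<bar>K\<bar>)"
    proof (intro mult_mono)
      show "E k x \<le> CE" using Ebnd[OF x] unfolding CE_def .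
      show "exp (-(c s x)\<^sup>2/8) \<le> 1" by simp
      have "-(c s x) * p s x \<le> \<bar>c s x\<bar> * \<bar>p s x\<bar>" by (simp add: abs_mult[symmetric])
      also have "\<dots> \<le> \<bar>B\<bar> * \<bar>K\<bar>"
        using c_bnd[OF s(1) x] p_bnd[OF s(1) x] by (intro mult_mono) auto
      finally show "exp (-(c s x) * p s x) \<le> exp (\<bar>B\<bar> * \<bar>K\<bar>)" by simp
    qed (auto simp: CE_def less_imp_le Epos)
    finally show ?thesis by simp
  qed
  have G1meas: "(\<lambda>x. F x * (exp (c s x) - 1)) \<in> borel_measurable (G k)" using Fmeas by measurable
  have G1bnd: "\<bar>F x * (exp (c s x) - 1)\<bar> \<le> CE * exp (\<bar>B\<bar> * \<bar>K\<bar>) * (exp \<bar>B\<bar> + 1)" if x: "x \<in> space M" for x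
  proof -
    have "\<bar>exp (c s x) - 1\<bar> \<le> exp \<bar>B\<bar> + 1"
    proof -
      have "exp (c s x) \<le> exp \<bar>B\<bar>" using c_bnd[OF s(1) x] by simp
      then show ?thesis using exp_gt_zero[of "c s x"] by linarith
    qed
    then show ?thesis unfolding abs_mult using Fbnd[OF x]
      by (intro mult_mono) auto
  qed
  have FM: "F \<in> borel_measurable M" using toM[OF Fmeas] .
  have G1M: "(\<lambda>x. F x * (exp (c s x) - 1)) \<in> borel_measurable M" using toM[OF G1meas] .
  have fm: "finite_measure M" by (rule finite_measure_axioms)
  have intF: "integrable M F" using bounded_integrable[OF fm FM Fbnd] .
  have intG1: "integrable M (\<lambda>x. F x * (exp (c s x) - 1))" using bounded_integrable[OF fm G1M G1bnd] .
  have intG1d: "integrable M (\<lambda>x. F x * (exp (c s x) - 1) * dd s x)"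
  proof (rule bounded_integrable[OF fm])
    show "(\<lambda>x. F x * (exp (c s x) - 1) * dd s x) \<in> borel_measurable M" using G1M by measurable
    fix x assume x: "x \<in> space M"
    have "\<bar>dd s x\<bar> \<le> 1" using d_01[OF s(1) x] by auto
    then show "\<bar>F x * (exp (c s x) - 1) * dd s x\<bar> \<le> CE * exp (\<bar>B\<bar> * \<bar>K\<bar>) * (exp \<bar>B\<bar> + 1) * 1"
      unfolding abs_mult[of _ "dd s x"] using G1bnd[OF x] by (intro mult_mono) auto
  qed
  have pM: "p s \<in> borel_measurable M" using toM[of "p s" k] by simp
  have intG1p: "integrable M (\<lambda>x. F x * (exp (c s x) - 1) * p s x)"
  proof (rule bounded_integrable[OF fm])
    show "(\<lambda>x. F x * (exp (c s x) - 1) * p s x) \<in> borel_measurable M" using G1M pM by measurable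
    fix x assume x: "x \<in> space M"
    show "\<bar>F x * (exp (c s x) - 1) * p s x\<bar> \<le> CE * exp (\<bar>B\<bar> * \<bar>K\<bar>) * (exp \<bar>B\<bar> + 1) * \<bar>K\<bar>"
      unfolding abs_mult[of _ "p s x"] using G1bnd[OF x] p_bnd[OF s(1) x] by (intro mult_mono) auto
  qed
  have fms: "finite_measure_subalgebra M (G k)"
    by (intro finite_measure_subalgebra.intro finite_measure_subalgebra_axioms.intro fm sub)
  interpret S: sigma_finite_subalgebra M "G k"
    by (rule finite_measure_subalgebra_is_sigma_finite[OF fms])
  have condk: "AE x in M. real_cond_exp M (G k) (dd s) x = p s x" using cond[OF s(1)] s(2) by simp
  have intd: "integrable M (dd s)"
  proof (rule bounded_integrable[OF fm, of _ 1])
    fix x assume "x \<in> space M"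
    then show "\<bar>dd s x\<bar> \<le> 1" using d_01[OF s(1), of x] by auto
  qed simp
  have d0: "0 \<le> dd s x \<and> dd s x \<le> 1" if "x \<in> space M" for x
    using d_01[OF s(1) that] by auto
  have p0: "AE x in M. p s x \<ge> 0"
  proof -
    have "AE x in M. real_cond_exp M (G k) (dd s) x \<ge> 0"
      by (rule S.real_cond_exp_pos) (use d0 in auto)
    with condk show ?thesis by auto
  qed
  have p1: "AE x in M. p s x \<le> 1"
  proof -
    have "AE x in M. real_cond_exp M (G k) (dd s) x \<le> real_cond_exp M (G k) (\<lambda>x. 1) x"
      by (rule S.real_cond_exp_mono) (use d0 intd in auto)
    moreover have "AE x in M. real_cond_exp M (G k) (\<lambda>x. 1) x = 1"
      by (rule S.real_cond_exp_F_meas) auto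
    ultimately show ?thesis using condk by eventually_elim auto
  qed
  have ce: "(\<integral>x. F x * (exp (c s x) - 1) * dd s x \<partial>M) = (\<integral>x. F x * (exp (c s x) - 1) * p s x \<partial>M)"
  proof -
    have "(\<integral>x. F x * (exp (c s x) - 1) * dd s x \<partial>M) = (\<integral>x. F x * (exp (c s x) - 1) * real_cond_exp M (G k) (dd s) x \<partial>M)"
      by (rule S.real_cond_exp_intg(2)[symmetric]) (use intG1d G1meas in auto)
    also have "\<dots> = (\<integral>x. F x * (exp (c s x) - 1) * p s x \<partial>M)"
      by (rule integral_cong_AE) (use condk G1M pM in auto)
    finally show ?thesis .
  qed
  have Esplit: "E (Suc k) x = F x + F x * (exp (c s x) - 1) * dd s x" if x: "x \<in> space M" for x
  proof -
    have "E (Suc k) x = E k x * exp (c s x * (dd s x - p s x) - (c s x)\<^sup>2/8)"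
      unfolding E_def s_def by (simp add: exp_add)
    also have "\<dots> = F x * exp (c s x * dd s x)"
      unfolding F_def by (simp add: exp_add[symmetric] exp_diff algebra_simps)
    also have "\<dots> = F x + F x * (exp (c s x) - 1) * dd s x"
      using d_01[OF s(1) x] by (auto simp: algebra_simps)
    finally show ?thesis .
  qed
  have intE: "integrable M (E (Suc k))"
  proof -
    have "integrable M (\<lambda>x. F x + F x * (exp (c s x) - 1) * dd s x)" using intF intG1d by simp
    moreover have "integrable M (\<lambda>x. F x + F x * (exp (c s x) - 1) * dd s x) \<longleftrightarrow> integrable M (E (Suc k))"
      using Esplit by (intro Bochner_Integration.integrable_cong[OF refl]) (simp add: eq_commute)
    ultimately show ?thesis by simp
  qed
  have "(\<integral>x. E (Suc k) x \<partial>M) = (\<integral>x. F x + F x * (exp (c s x) - 1) * dd s x \<partial>M)"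
    by (rule Bochner_Integration.integral_cong) (use Esplit in auto)
  also have "\<dots> = (\<integral>x. F x \<partial>M) + (\<integral>x. F x * (exp (c s x) - 1) * dd s x \<partial>M)"
    using intF intG1d by simp
  also have "\<dots> = (\<integral>x. F x \<partial>M) + (\<integral>x. F x * (exp (c s x) - 1) * p s x \<partial>M)" using ce by simp
  also have "\<dots> = (\<integral>x. F x + F x * (exp (c s x) - 1) * p s x \<partial>M)"
    using intF intG1p by simp
  also have "\<dots> \<le> (\<integral>x. E k x \<partial>M)"
  proof (rule integral_mono_AE)
    show "integrable M (\<lambda>x. F x + F x * (exp (c s x) - 1) * p s x)" using intF intG1p by simp
    show "integrable M (E k)" by (rule IH(1))
    show "AE x in M. F x + F x * (exp (c s x) - 1) * p s x \<le> E k x"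
      using p0 p1
    proof eventually_elim
      case (elim x)
      have "F x + F x * (exp (c s x) - 1) * p s x = E k x * exp (-(c s x)\<^sup>2/8) * (exp (-(c s x) * p s x) * (1 + p s x * (exp (c s x) - 1)))"
        unfolding F_def by (simp add: algebra_simps)
      also have "\<dots> \<le> E k x * exp (-(c s x)\<^sup>2/8) * exp ((c s x)\<^sup>2/8)"
        using bern_hoeff[OF elim] Epos by (intro mult_left_mono) (auto simp: less_imp_le)
      also have "\<dots> = E k x" by (simp add: exp_add[symmetric])
      finally show ?case .
    qed
  qed
  also have "\<dots> \<le> 1" by (rule IH(2))
  finally show ?case using intE unfolding E_def by simp
qed


lemma quad_ident:
  fixes y :: "'n::finite \<Rightarrow> real" and S :: "nat set" and f :: "nat \<Rightarrow> real" and g :: "nat \<Rightarrow> 'n \<Rightarrow> real"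
  shows "(\<Sum>i\<in>UNIV. \<Sum>j\<in>UNIV. ((if i = j then 1 else 0) + (\<Sum>s\<in>S. f s * g s i * g s j)) * y i * y j)
       = (\<Sum>i\<in>UNIV. (y i)\<^sup>2) + (\<Sum>s\<in>S. f s * (\<Sum>i\<in>UNIV. g s i * y i)\<^sup>2)"
proof -
  have "(\<Sum>i\<in>UNIV. \<Sum>j\<in>UNIV. ((if i = j then 1 else 0) + (\<Sum>s\<in>S. f s * g s i * g s j)) * y i * y j)
      = (\<Sum>i\<in>UNIV. \<Sum>j\<in>UNIV. (if i = j then 1 else 0) * y i * y j) + (\<Sum>i\<in>UNIV. \<Sum>j\<in>UNIV. (\<Sum>s\<in>S. f s * g s i * g s j) * y i * y j)"
    by (simp add: distrib_right sum.distrib)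
  also have "(\<Sum>i\<in>UNIV. \<Sum>j\<in>UNIV. (if i = j then 1 else 0) * y i * y j) = (\<Sum>i\<in>UNIV. (y i)\<^sup>2)"
  proof (rule sum.cong[OF refl])
    fix i :: 'n
    have "(\<Sum>j\<in>UNIV. (if i = j then 1 else 0) * y i * y j) = (\<Sum>j\<in>UNIV. if j = i then y i * y i else 0)"
      by (rule sum.cong) auto
    then show "(\<Sum>j\<in>UNIV. (if i = j then 1 else 0) * y i * y j) = (y i)\<^sup>2" by (simp add: power2_eq_square)
  qed
  also have "(\<Sum>i\<in>UNIV. \<Sum>j\<in>UNIV. (\<Sum>s\<in>S. f s * g s i * g s j) * y i * y j)
      = (\<Sum>i\<in>UNIV. \<Sum>j\<in>UNIV. \<Sum>s\<in>S. f s * ((g s i * y i) * (g s j * y j)))"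
    by (simp add: sum_distrib_left sum_distrib_right mult_ac)
  also have "\<dots> = (\<Sum>i\<in>UNIV. \<Sum>s\<in>S. \<Sum>j\<in>UNIV. f s * ((g s i * y i) * (g s j * y j)))"
    by (rule sum.cong[OF refl], rule sum.swap)
  also have "\<dots> = (\<Sum>s\<in>S. \<Sum>i\<in>UNIV. \<Sum>j\<in>UNIV. f s * ((g s i * y i) * (g s j * y j)))"
    by (rule sum.swap)
  also have "\<dots> = (\<Sum>s\<in>S. f s * (\<Sum>i\<in>UNIV. g s i * y i)\<^sup>2)"
  proof (rule sum.cong[OF refl])
    fix s
    have "(\<Sum>i\<in>UNIV. g s i * y i)\<^sup>2 = (\<Sum>i\<in>UNIV. \<Sum>j\<in>UNIV. (g s i * y i) * (g s j * y j))"
      unfolding power2_eq_square by (rule sum_product)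
    then show "(\<Sum>i\<in>UNIV. \<Sum>j\<in>UNIV. f s * ((g s i * y i) * (g s j * y j))) = f s * (\<Sum>i\<in>UNIV. g s i * y i)\<^sup>2"
      by (simp add: sum_distrib_left)
  qed
  finally show ?thesis .
qed

lemma Vquad:
  fixes v :: "real^'n" and S :: "nat set"
  shows "v \<bullet> ((mat 1 + (\<Sum>s\<in>S. w s *\<^sub>R outer (u s))) *v v)
       = (\<Sum>i\<in>UNIV. (v$i)\<^sup>2) + (\<Sum>s\<in>S. w s * (\<Sum>i\<in>UNIV. (u s)$i * v$i)\<^sup>2)"
proof -
  have "v \<bullet> ((mat 1 + (\<Sum>s\<in>S. w s *\<^sub>R outer (u s))) *v v)
      = (\<Sum>i\<in>UNIV. \<Sum>j\<in>UNIV. ((if i = j then 1 else 0) + (\<Sum>s\<in>S. w s * (u s)$i * (u s)$j)) * v$i * v$j)"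
    unfolding inner_vec_def matrix_vector_mult_def
    by (simp add: mat_def outer_def sum_distrib_left mult_ac)
  also have "\<dots> = (\<Sum>i\<in>UNIV. (v$i)\<^sup>2) + (\<Sum>s\<in>S. w s * (\<Sum>i\<in>UNIV. (u s)$i * v$i)\<^sup>2)"
    by (rule quad_ident[where y="\<lambda>i. v$i" and S=S and f=w and g="\<lambda>s i. (u s)$i"])
  finally show ?thesis .
qed

lemma sum_ln_le:
  fixes A :: "'n::finite \<Rightarrow> real"
  assumes A: "\<And>i. A i \<ge> 0"
  shows "(\<Sum>i\<in>UNIV. ln (1 + A i)) \<le> real CARD('n) * ln (1 + (\<Sum>i\<in>UNIV. A i) / real CARD('n))"
proof -
  define n where "n = real CARD('n)"
  have n: "n > 0" unfolding n_def by simp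
  define m where "m = 1 + (\<Sum>i\<in>UNIV. A i) / n"
  have m: "m > 0" unfolding m_def using A n by (simp add: sum_nonneg add_pos_nonneg)
  have "ln (1 + A i) - ln m \<le> (1 + A i) / m - 1" for i
  proof -
    have "ln ((1 + A i) / m) \<le> (1 + A i) / m - 1"
      by (rule ln_le_minus_one) (use A[of i] m in simp)
    then show ?thesis using A[of i] m by (simp add: ln_div)
  qed
  then have "(\<Sum>i\<in>UNIV. ln (1 + A i) - ln m) \<le> (\<Sum>i\<in>UNIV. (1 + A i) / m - 1)"
    by (rule sum_mono)
  also have "(\<Sum>i\<in>UNIV. (1 + A i) / m - 1) = (n + (\<Sum>i\<in>UNIV. A i)) / m - n"
    by (simp add: sum_subtractf sum.distrib sum_divide_distrib[symmetric] n_def)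
  also have "\<dots> = 0"
  proof -
    have "n + (\<Sum>i\<in>UNIV. A i) > 0" using n A by (simp add: sum_nonneg add_pos_nonneg)
    then show ?thesis unfolding m_def using n by (simp add: field_simps)
  qed
  finally have "(\<Sum>i\<in>UNIV. ln (1 + A i)) - n * ln m \<le> 0"
    by (simp add: sum_subtractf n_def)
  then show ?thesis unfolding m_def n_def by simp
qed

lemma final_alg:
  fixes X Q Sv v2 l1 L C :: real
  assumes X0: "X \<ge> 0" and Xe: "X\<^sup>2 = v2 + Q" and v20: "v2 \<ge> 0" and v2L: "v2 \<le> 4*L\<^sup>2" and L0: "L \<ge> 0"
    and l1: "l1 > 0" and QS: "l1/2 * Q \<le> Sv" and bnd: "\<And>a. a*Sv - a\<^sup>2*X\<^sup>2/8 < C"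
  shows "X \<le> (sqrt (2*C) + 2*l1*L)/l1"
proof -
  have C0: "C > 0" using bnd[of 0] by simp
  have SvX: "Sv \<le> X * sqrt (C/2)"
  proof (cases "Sv \<le> 0")
    case True
    have "0 \<le> X * sqrt (C/2)" using X0 C0 by simp
    then show ?thesis using True by linarith
  next
    case False
    then have Sv: "Sv > 0" by simp
    show ?thesis
    proof (cases "X = 0")
      case True
      then have "C/Sv * Sv < C" using bnd[of "C/Sv"] by simp
      then show ?thesis using Sv by simp
    next
      case False
      then have X: "X > 0" using X0 by simp
      have "4*Sv/X\<^sup>2 * Sv - (4*Sv/X\<^sup>2)\<^sup>2*X\<^sup>2/8 < C" by (rule bnd)
      moreover have "4*Sv/X\<^sup>2 * Sv - (4*Sv/X\<^sup>2)\<^sup>2*X\<^sup>2/8 = 2*Sv\<^sup>2/X\<^sup>2"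
        using X by (simp add: field_simps power2_eq_square)
      ultimately have "2*Sv\<^sup>2/X\<^sup>2 < C" by simp
      then have "Sv\<^sup>2 < (X * sqrt (C/2))\<^sup>2"
        using X C0 by (simp add: field_simps power_mult_distrib)
      then have "Sv < X * sqrt (C/2)" by (rule power2_less_imp_less) (use X C0 in simp)
      then show ?thesis by simp
    qed
  qed
  define \<beta> where "\<beta> = sqrt (2*C) / l1"
  have \<beta>0: "\<beta> \<ge> 0" unfolding \<beta>_def using C0 l1 by simp
  have \<beta>e: "2/l1 * sqrt (C/2) = \<beta>"
  proof -
    have "2 * sqrt (C/2) = sqrt (2*C)"
      using C0 by (metis mult.commute real_sqrt_four real_sqrt_mult times_divide_eq_right
          nonzero_mult_div_cancel_left zero_neq_numeral mult.assoc numeral_times_numeral semiring_norm(12) semiring_norm(13) times_divide_eq_left)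
    then show ?thesis unfolding \<beta>_def by (simp add: field_simps)
  qed
  have "Q \<le> 2/l1 * Sv" using QS l1 by (simp add: field_simps)
  also have "\<dots> \<le> 2/l1 * (X * sqrt (C/2))" using SvX l1 by (intro mult_left_mono) auto
  also have "\<dots> = \<beta> * X" using \<beta>e by (simp add: mult_ac)
  finally have QX: "Q \<le> \<beta> * X" .
  have X2: "X\<^sup>2 \<le> 4*L\<^sup>2 + \<beta> * X" using Xe v2L QX by simp
  have "X \<le> \<beta> + 2*L"
  proof (rule ccontr)
    assume "\<not> X \<le> \<beta> + 2*L"
    then have h: "X > \<beta> + 2*L" by simp
    then have "X * X > X * (\<beta> + 2*L)" using X0 \<beta>0 L0 by (intro mult_strict_left_mono) auto
    moreover have "X * (2*L) \<ge> (2*L) * (2*L)" using h \<beta>0 L0 by (intro mult_right_mono) auto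
    ultimately have "X\<^sup>2 > \<beta>*X + 4*L\<^sup>2" by (simp add: power2_eq_square algebra_simps)
    then show False using X2 by simp
  qed
  also have "\<beta> + 2*L = (sqrt (2*C) + 2*l1*L)/l1" unfolding \<beta>_def using l1 by (simp add: field_simps)
  finally show ?thesis .
qed


lemma vec_nth_meas[measurable]: "(\<lambda>v::real^'n. v $ i) \<in> borel_measurable borel"
  by (intro borel_measurable_continuous_onI linear_continuous_on bounded_linear_vec_nth)

lemma dot_meas:
  fixes f :: "'b \<Rightarrow> real^'n"
  assumes f: "f \<in> borel_measurable N"
  shows "(\<lambda>z. \<Sum>i\<in>UNIV. snd z i * f (fst z) $ i) \<in> borel_measurable (N \<Otimes>\<^sub>M PiM UNIV (\<lambda>_. lborel :: real measure))"
proof (rule borel_measurable_sum)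
  fix i :: 'n
  have a: "(\<lambda>z. snd z i) \<in> measurable (N \<Otimes>\<^sub>M PiM UNIV (\<lambda>_. lborel :: real measure)) lborel"
    by (rule measurable_compose[OF measurable_snd measurable_component_singleton]) simp
  then have a': "(\<lambda>z. snd z i) \<in> borel_measurable (N \<Otimes>\<^sub>M PiM UNIV (\<lambda>_. lborel :: real measure))"
    by (simp add: measurable_lborel2)
  have b: "(\<lambda>z. f (fst z) $ i) \<in> borel_measurable (N \<Otimes>\<^sub>M PiM UNIV (\<lambda>_. lborel :: real measure))"
    by (rule measurable_compose[OF measurable_compose[OF measurable_fst f] vec_nth_meas])
  show "(\<lambda>z. snd z i * f (fst z) $ i) \<in> borel_measurable (N \<Otimes>\<^sub>M PiM UNIV (\<lambda>_. lborel :: real measure))"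
    using a' b by (rule borel_measurable_times)
qed

lemma det_part:
  fixes u :: "nat \<Rightarrow> real^'n" and w dd :: "nat \<Rightarrow> real" and \<theta>s \<theta>h :: "real^'n"
    and m \<mu> :: "real \<Rightarrow> real" and \<Theta> :: "(real^'n) set"
  assumes w0: "\<And>s. s \<in> S \<Longrightarrow> w s \<ge> 0"
    and m: "\<And>z. (m has_real_derivative \<mu> z) (at z)" and \<mu>d: "\<And>z. \<mu> differentiable (at z)"
    and dlow: "\<And>s \<theta>. s \<in> S \<Longrightarrow> \<theta> \<in> \<Theta> \<Longrightarrow> deriv \<mu> (u s \<bullet> \<theta>) \<ge> l1"
    and cv: "convex \<Theta>" and ts: "\<theta>s \<in> \<Theta>" and th: "\<theta>h \<in> \<Theta>"
    and mn: "(\<Sum>s\<in>S. w s * (m (u s \<bullet> \<theta>h) - dd s * (u s \<bullet> \<theta>h))) \<le> (\<Sum>s\<in>S. w s * (m (u s \<bullet> \<theta>s) - dd s * (u s \<bullet> \<theta>s)))"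
  shows "l1/2 * (\<Sum>s\<in>S. w s * (u s \<bullet> (\<theta>h - \<theta>s))\<^sup>2) \<le> (\<Sum>s\<in>S. w s * (dd s - \<mu> (u s \<bullet> \<theta>s)) * (u s \<bullet> (\<theta>h - \<theta>s)))"
proof -
  define a where "a s = u s \<bullet> \<theta>s" for s
  define b where "b s = u s \<bullet> (\<theta>h - \<theta>s)" for s
  have ab: "u s \<bullet> \<theta>h = a s + b s" for s unfolding a_def b_def by (simp add: inner_diff_right)
  have per: "l1 * (b s)\<^sup>2 / 2 \<le> m (a s + b s) - m (a s) - \<mu> (a s) * b s" if s: "s \<in> S" for s
  proof (rule strong_conv_1d[OF m \<mu>d])
    fix r :: real assume r: "0 \<le> r" "r \<le> 1"
    have "(1 - r) *\<^sub>R \<theta>s + r *\<^sub>R \<theta>h \<in> \<Theta>" using cv ts th r by (intro convexD) auto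
    moreover have "u s \<bullet> ((1 - r) *\<^sub>R \<theta>s + r *\<^sub>R \<theta>h) = a s + r * b s"
      unfolding a_def b_def by (simp add: inner_add_right inner_diff_right algebra_simps)
    ultimately show "l1 \<le> deriv \<mu> (a s + r * b s)" using dlow[OF s] by metis
  qed
  have s1: "(\<Sum>s\<in>S. w s * (l1 * (b s)\<^sup>2 / 2)) \<le> (\<Sum>s\<in>S. w s * (m (a s + b s) - m (a s) - \<mu> (a s) * b s))"
    by (intro sum_mono mult_left_mono per w0)
  have eq: "(\<Sum>s\<in>S. w s * (m (a s + b s) - m (a s) - \<mu> (a s) * b s))
      = ((\<Sum>s\<in>S. w s * (m (u s \<bullet> \<theta>h) - dd s * (u s \<bullet> \<theta>h))) - (\<Sum>s\<in>S. w s * (m (u s \<bullet> \<theta>s) - dd s * (u s \<bullet> \<theta>s))))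
        + (\<Sum>s\<in>S. w s * (dd s - \<mu> (u s \<bullet> \<theta>s)) * (u s \<bullet> (\<theta>h - \<theta>s)))"
    unfolding sum_subtractf[symmetric] sum.distrib[symmetric] ab
    by (rule sum.cong) (auto simp: a_def b_def algebra_simps)
  have "l1/2 * (\<Sum>s\<in>S. w s * (u s \<bullet> (\<theta>h - \<theta>s))\<^sup>2) = (\<Sum>s\<in>S. w s * (l1 * (b s)\<^sup>2 / 2))"
    unfolding b_def by (simp add: sum_distrib_left mult_ac)
  then show ?thesis using s1 eq mn by linarith
qed


theorem mainTheorem3:
  fixes M :: "'a measure"
    and G :: "nat \<Rightarrow> 'a measure"
    and t d :: nat
    and w dd :: "nat \<Rightarrow> 'a \<Rightarrow> real"
    and u :: "nat \<Rightarrow> 'a \<Rightarrow> real^'n"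
    and R L l1 \<Delta> :: real
    and \<mu> m :: "real \<Rightarrow> real"
    and \<Theta> :: "(real^'n) set"
    and \<theta>star :: "real^'n"
    and \<theta>hat :: "'a \<Rightarrow> real^'n"
  assumes "prob_space M"
    and filt_sub: "\<And>s. subalgebra M (G s)"
    and filt_mono: "\<And>s. sets (G s) \<subseteq> sets (G (Suc s))"
    and dim: "CARD('n) = d + 2"
    and w_meas: "\<And>s. s \<in> {1..t} \<Longrightarrow> w s \<in> borel_measurable (G (s - 1))"
    and w_01: "\<And>s x. s \<in> {1..t} \<Longrightarrow> x \<in> space M \<Longrightarrow> w s x \<in> {0, 1}"
    and u_meas: "\<And>s. s \<in> {1..t} \<Longrightarrow> u s \<in> borel_measurable (G (s - 1))"
    and u_bound: "\<And>s x. s \<in> {1..t} \<Longrightarrow> x \<in> space M \<Longrightarrow> (norm (u s x))\<^sup>2 \<le> R"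
    and R_ge: "R \<ge> 1"
    and d_meas: "\<And>s. s \<in> {1..t} \<Longrightarrow> dd s \<in> borel_measurable (G s)"
    and d_01: "\<And>s x. s \<in> {1..t} \<Longrightarrow> x \<in> space M \<Longrightarrow> dd s x \<in> {0, 1}"
    and cond_exp: "\<And>s. s \<in> {1..t} \<Longrightarrow>
        AE x in M. real_cond_exp M (G (s - 1)) (dd s) x = \<mu> (u s x \<bullet> \<theta>star)"
    and \<theta>star_in: "\<theta>star \<in> \<Theta>"
    and \<Theta>_convex: "convex \<Theta>"
    and \<Theta>_bound: "\<And>\<theta>. \<theta> \<in> \<Theta> \<Longrightarrow> norm \<theta> \<le> L"
    and \<mu>_diff: "\<And>z. \<mu> differentiable (at z)"
    and \<mu>_deriv: "\<And>s x \<theta>. s \<in> {1..t} \<Longrightarrow> x \<in> space M \<Longrightarrow> \<theta> \<in> \<Theta> \<Longrightarrow>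
        deriv \<mu> (u s x \<bullet> \<theta>) \<ge> l1"
    and l1_pos: "l1 > 0"
    and m_deriv: "\<And>z. (m has_real_derivative \<mu> z) (at z)"
    and \<theta>hat_in: "\<And>x. x \<in> space M \<Longrightarrow> \<theta>hat x \<in> \<Theta>"
    and \<theta>hat_min: "\<And>x \<theta>. x \<in> space M \<Longrightarrow> \<theta> \<in> \<Theta> \<Longrightarrow>
        (\<Sum>s=1..t. w s x * (m (u s x \<bullet> \<theta>hat x) - dd s x * (u s x \<bullet> \<theta>hat x)))
          \<le> (\<Sum>s=1..t. w s x * (m (u s x \<bullet> \<theta>) - dd s x * (u s x \<bullet> \<theta>)))"
    and \<Delta>_range: "0 < \<Delta>" "\<Delta> < 1"
  shows "\<exists>A \<in> sets M. measure M A \<ge> 1 - \<Delta> \<and>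
    (\<forall>x \<in> A.
      Vnorm (mat 1 + (\<Sum>s=1..t. w s x *\<^sub>R outer (u s x))) (\<theta>hat x - \<theta>star)
        \<le> (2 * sqrt (real (d + 2) * ln (1 + (\<Sum>s=1..t. w s x) * R\<^sup>2 / real (d + 2))
                     + 2 * ln (1 / \<Delta>))
           + 2 * l1 * L) / l1)"
proof -
  note P = \<open>prob_space M\<close>
  interpret prob_space M by (rule P)
  define n where "n = real CARD('n)"
  have n_eq: "n = real (d + 2)" unfolding n_def using dim by simp
  have n_pos: "n > 0" unfolding n_def by simp
  define p where "p s x = \<mu> (u s x \<bullet> \<theta>star)" for s x
  define dotf where "dotf y v = (\<Sum>i\<in>UNIV. y i * v $ i)" for y :: "'n \<Rightarrow> real" and v :: "real^'n"
  define Z where "Z y x = exp (\<Sum>s\<in>{1..t}. (w s x * dotf y (u s x)) * (dd s x - p s x) - (w s x * dotf y (u s x))\<^sup>2/8)" for y x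
  define \<rho> where "\<rho> y = (\<Prod>i\<in>UNIV. normal_density 0 2 (y i))" for y :: "'n \<Rightarrow> real"
  define \<Lambda> where "\<Lambda> = PiM (UNIV :: 'n set) (\<lambda>_. lborel :: real measure)"
  define W where "W x = (\<integral>\<^sup>+ y. ennreal (\<rho> y * Z y x) \<partial>\<Lambda>)" for x
  interpret \<Lambda>: finite_product_sigma_finite "\<lambda>_::'n. lborel :: real measure" "UNIV :: 'n set" by standard auto
  have sf\<Lambda>: "sigma_finite_measure \<Lambda>" unfolding \<Lambda>_def by (rule \<Lambda>.sigma_finite_measure_axioms)
  interpret PS: pair_sigma_finite M \<Lambda>
    by (intro pair_sigma_finite.intro sf\<Lambda> sigma_finite_measure_axioms)
  have L0: "L \<ge> 0" using \<Theta>_bound[OF \<theta>star_in] norm_ge_zero[of \<theta>star] by linarith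
  have R0: "R \<ge> 0" using R_ge by simp
  have toM: "f \<in> borel_measurable M" if "f \<in> borel_measurable (G a)" for a and f :: "'a \<Rightarrow> 'b::topological_space"
    using measurable_from_subalg[OF filt_sub that] .
  have \<mu>cont: "continuous_on UNIV \<mu>"
    using \<mu>_diff by (simp add: continuous_at_imp_continuous_on differentiable_imp_continuous_within)
  have \<mu>meas[measurable]: "\<mu> \<in> borel_measurable borel" by (rule borel_measurable_continuous_onI[OF \<mu>cont])
  obtain K where K: "\<And>z. z \<in> {-(sqrt R * L)..sqrt R * L} \<Longrightarrow> \<bar>\<mu> z\<bar> \<le> K"
  proof -
    have "compact (\<mu> ` {-(sqrt R * L)..sqrt R * L})"
      by (rule compact_continuous_image) (use \<mu>cont continuous_on_subset in auto)
    then obtain K where "\<forall>y\<in>\<mu> ` {-(sqrt R * L)..sqrt R * L}. norm y \<le> K"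
      using compact_imp_bounded bounded_iff by blast
    then show ?thesis by (intro that[of K]) auto
  qed
  have unorm: "norm (u s x) \<le> sqrt R" if "s \<in> {1..t}" "x \<in> space M" for s x
    using u_bound[OF that] by (simp add: real_le_rsqrt)
  have p_bnd: "\<bar>p s x\<bar> \<le> K" if "s \<in> {1..t}" "x \<in> space M" for s x
  proof -
    have "\<bar>u s x \<bullet> \<theta>star\<bar> \<le> norm (u s x) * norm \<theta>star" by (rule Cauchy_Schwarz_ineq2)
    also have "\<dots> \<le> sqrt R * L"
      using unorm[OF that] \<Theta>_bound[OF \<theta>star_in] R0 by (intro mult_mono) auto
    finally show ?thesis unfolding p_def by (intro K) auto
  qed
  have p_meas: "p s \<in> borel_measurable (G (s - 1))" if "s \<in> {1..t}" for s
  proof -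
    note [measurable] = u_meas[OF that]
    show ?thesis unfolding p_def by measurable
  qed
  have dotf_meas: "(\<lambda>x. dotf y (u s x)) \<in> borel_measurable (G (s - 1))" if "s \<in> {1..t}" for s y
  proof -
    note [measurable] = u_meas[OF that]
    show ?thesis unfolding dotf_def by measurable
  qed
  have dotf_bnd: "\<bar>dotf y (u s x)\<bar> \<le> (\<Sum>i\<in>UNIV. \<bar>y i\<bar>) * sqrt R" if "s \<in> {1..t}" "x \<in> space M" for s x y
  proof -
    have "\<bar>dotf y (u s x)\<bar> \<le> (\<Sum>i\<in>UNIV. \<bar>y i * u s x $ i\<bar>)" unfolding dotf_def by (rule sum_abs)
    also have "\<dots> \<le> (\<Sum>i\<in>UNIV. \<bar>y i\<bar> * sqrt R)"
    proof (rule sum_mono)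
      fix i
      have "\<bar>u s x $ i\<bar> \<le> sqrt R" using component_le_norm_cart[of "u s x" i] unorm[OF that] by linarith
      then show "\<bar>y i * u s x $ i\<bar> \<le> \<bar>y i\<bar> * sqrt R" unfolding abs_mult by (intro mult_left_mono) auto
    qed
    finally show ?thesis by (simp add: sum_distrib_right)
  qed
  have EZ: "(\<integral>\<^sup>+ x. ennreal (Z y x) \<partial>M) \<le> 1" for y
  proof -
    have "integrable M (\<lambda>x. exp (\<Sum>s\<in>{1..t}. (w s x * dotf y (u s x)) * (dd s x - p s x) - (w s x * dotf y (u s x))\<^sup>2/8))
      \<and> (\<integral>x. exp (\<Sum>s\<in>{1..t}. (w s x * dotf y (u s x)) * (dd s x - p s x) - (w s x * dotf y (u s x))\<^sup>2/8) \<partial>M) \<le> 1"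
    proof (rule mart[where M=M and G=G and t=t and k=t and dd=dd and p=p and c="\<lambda>s x. w s x * dotf y (u s x)" and B="(\<Sum>i\<in>UNIV. \<bar>y i\<bar>) * sqrt R" and K=K])
      fix s assume s: "s \<in> {1..t}"
      note [measurable] = w_meas[OF s] dotf_meas[OF s]
      show "(\<lambda>x. w s x * dotf y (u s x)) \<in> borel_measurable (G (s - 1))" by measurable
      show "dd s \<in> borel_measurable (G s)" by (rule d_meas[OF s])
      show "p s \<in> borel_measurable (G (s - 1))" by (rule p_meas[OF s])
      show "AE x in M. real_cond_exp M (G (s - 1)) (dd s) x = p s x" using cond_exp[OF s] unfolding p_def .
      fix x assume x: "x \<in> space M"
      show "dd s x \<in> {0, 1}" by (rule d_01[OF s x])
      show "\<bar>p s x\<bar> \<le> K" by (rule p_bnd[OF s x])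
      have "\<bar>w s x\<bar> \<le> 1" using w_01[OF s x] by auto
      then show "\<bar>w s x * dotf y (u s x)\<bar> \<le> (\<Sum>i\<in>UNIV. \<bar>y i\<bar>) * sqrt R"
        unfolding abs_mult using dotf_bnd[OF s x, of y] by (metis abs_ge_zero mult_le_one mult_right_mono order_trans mult_1 mult.commute)
    qed (use P filt_sub filt_mono in auto)
    then have int: "integrable M (Z y)" and le: "(\<integral>x. Z y x \<partial>M) \<le> 1" unfolding Z_def by auto
    have "(\<integral>\<^sup>+ x. ennreal (Z y x) \<partial>M) = ennreal (\<integral>x. Z y x \<partial>M)"
      by (rule nn_integral_eq_integral[OF int]) (auto simp: Z_def)
    then show ?thesis using le by (simp add: ennreal_leI)
  qed
  have jm: "(\<lambda>z. ennreal (\<rho> (snd z) * Z (snd z) (fst z))) \<in> borel_measurable (M \<Otimes>\<^sub>M \<Lambda>)"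
  proof -
    have "(\<lambda>z. \<Sum>s\<in>{1..t}. (w s (fst z) * dotf (snd z) (u s (fst z))) * (dd s (fst z) - p s (fst z))
              - (w s (fst z) * dotf (snd z) (u s (fst z)))\<^sup>2/8) \<in> borel_measurable (M \<Otimes>\<^sub>M \<Lambda>)"
    proof (rule borel_measurable_sum)
      fix s assume s: "s \<in> {1..t}"
      note [measurable] = toM[OF w_meas[OF s]] toM[OF d_meas[OF s]] toM[OF p_meas[OF s]]
      have [measurable]: "(\<lambda>z. dotf (snd z) (u s (fst z))) \<in> borel_measurable (M \<Otimes>\<^sub>M \<Lambda>)"
        unfolding dotf_def \<Lambda>_def by (rule dot_meas[OF toM[OF u_meas[OF s]]])
      show "(\<lambda>z. (w s (fst z) * dotf (snd z) (u s (fst z))) * (dd s (fst z) - p s (fst z))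
              - (w s (fst z) * dotf (snd z) (u s (fst z)))\<^sup>2/8) \<in> borel_measurable (M \<Otimes>\<^sub>M \<Lambda>)"
        by measurable
    qed
    moreover have "(\<lambda>z. \<rho> (snd z)) \<in> borel_measurable (M \<Otimes>\<^sub>M \<Lambda>)"
      unfolding \<rho>_def \<Lambda>_def by measurable
    ultimately show ?thesis unfolding Z_def by measurable
  qed
  have jm': "case_prod (\<lambda>x y. ennreal (\<rho> y * Z y x)) \<in> borel_measurable (M \<Otimes>\<^sub>M \<Lambda>)"
    using jm by (simp add: case_prod_beta')
  have Wmeas: "W \<in> borel_measurable M"
    unfolding W_def by (rule sigma_finite_measure.borel_measurable_nn_integral[OF sf\<Lambda> jm'])
  have sp\<Lambda>: "space \<Lambda> = UNIV" unfolding \<Lambda>_def by (simp add: space_PiM)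
  have Zmeas: "(\<lambda>x. ennreal (\<rho> y * Z y x)) \<in> borel_measurable M" for y
  proof -
    have "(\<lambda>x. (x, y)) \<in> measurable M (M \<Otimes>\<^sub>M \<Lambda>)" by (rule measurable_Pair2') (simp add: sp\<Lambda>)
    from measurable_comp[OF this jm] show ?thesis by (simp add: comp_def)
  qed
  have int\<rho>: "(\<integral>\<^sup>+ y. ennreal (\<rho> y) \<partial>\<Lambda>) = 1"
  proof -
    have "(\<integral>\<^sup>+ y. ennreal (\<rho> y) \<partial>\<Lambda>) = (\<integral>\<^sup>+ y. (\<Prod>i\<in>UNIV. ennreal (normal_density 0 2 (y i))) \<partial>\<Lambda>)"
      unfolding \<rho>_def by (simp add: prod_ennreal)
    also have "\<dots> = (\<Prod>i\<in>(UNIV::'n set). (\<integral>\<^sup>+ z. ennreal (normal_density 0 2 z) \<partial>lborel))"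
      unfolding \<Lambda>_def by (rule \<Lambda>.product_nn_integral_prod) auto
    also have "(\<integral>\<^sup>+ z. ennreal (normal_density 0 2 z) \<partial>lborel) = 1"
    proof -
      have "(\<integral>\<^sup>+ z. ennreal (normal_density 0 2 z) \<partial>lborel) = ennreal (\<integral>z. normal_density 0 2 z \<partial>lborel)"
        by (rule nn_integral_eq_integral) (auto intro: integrable_normal_density[of 2])
      also have "\<dots> = 1" using integral_normal_density[of 2] by simp
      finally show ?thesis .
    qed
    finally show ?thesis by simp
  qed
  have EW: "(\<integral>\<^sup>+ x. W x \<partial>M) \<le> 1"
  proof -
    have "(\<integral>\<^sup>+ x. W x \<partial>M) = (\<integral>\<^sup>+ y. (\<integral>\<^sup>+ x. ennreal (\<rho> y * Z y x) \<partial>M) \<partial>\<Lambda>)"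
      unfolding W_def by (rule PS.Fubini'[OF jm', symmetric])
    also have "\<dots> \<le> (\<integral>\<^sup>+ y. ennreal (\<rho> y) \<partial>\<Lambda>)"
    proof (rule nn_integral_mono)
      fix y
      have r0: "\<rho> y \<ge> 0" unfolding \<rho>_def by (intro prod_nonneg) auto
      have "(\<integral>\<^sup>+ x. ennreal (\<rho> y * Z y x) \<partial>M) = (\<integral>\<^sup>+ x. ennreal (\<rho> y) * ennreal (Z y x) \<partial>M)"
        using r0 by (simp add: ennreal_mult')
      also have "\<dots> = ennreal (\<rho> y) * (\<integral>\<^sup>+ x. ennreal (Z y x) \<partial>M)"
      proof (rule nn_integral_cmult)
        have "(\<lambda>x. ennreal (Z y x)) \<in> borel_measurable M"
        proof -
          have "(\<lambda>x. (x, y)) \<in> measurable M (M \<Otimes>\<^sub>M \<Lambda>)" by (rule measurable_Pair2') (simp add: sp\<Lambda>)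
          moreover have "(\<lambda>z. ennreal (Z (snd z) (fst z))) \<in> borel_measurable (M \<Otimes>\<^sub>M \<Lambda>)"
          proof -
            have "(\<lambda>z. \<Sum>s\<in>{1..t}. (w s (fst z) * dotf (snd z) (u s (fst z))) * (dd s (fst z) - p s (fst z))
                  - (w s (fst z) * dotf (snd z) (u s (fst z)))\<^sup>2/8) \<in> borel_measurable (M \<Otimes>\<^sub>M \<Lambda>)"
            proof (rule borel_measurable_sum)
              fix s assume s: "s \<in> {1..t}"
              note [measurable] = toM[OF w_meas[OF s]] toM[OF d_meas[OF s]] toM[OF p_meas[OF s]]
              have [measurable]: "(\<lambda>z. dotf (snd z) (u s (fst z))) \<in> borel_measurable (M \<Otimes>\<^sub>M \<Lambda>)"
                unfolding dotf_def \<Lambda>_def by (rule dot_meas[OF toM[OF u_meas[OF s]]])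
              show "(\<lambda>z. (w s (fst z) * dotf (snd z) (u s (fst z))) * (dd s (fst z) - p s (fst z))
                  - (w s (fst z) * dotf (snd z) (u s (fst z)))\<^sup>2/8) \<in> borel_measurable (M \<Otimes>\<^sub>M \<Lambda>)"
                by measurable
            qed
            then show ?thesis unfolding Z_def by measurable
          qed
          ultimately have "(\<lambda>z. ennreal (Z (snd z) (fst z))) \<circ> (\<lambda>x. (x, y)) \<in> borel_measurable M"
            by (rule measurable_comp)
          then show ?thesis by (simp add: comp_def)
        qed
        then show "(\<lambda>x. ennreal (Z y x)) \<in> borel_measurable M" .
      qed
      also have "\<dots> \<le> ennreal (\<rho> y) * 1" by (intro mult_left_mono EZ) auto
      finally show "(\<integral>\<^sup>+ x. ennreal (\<rho> y * Z y x) \<partial>M) \<le> ennreal (\<rho> y)" by simp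
    qed
    finally show ?thesis using int\<rho> by simp
  qed
  have Bad_sets: "{x\<in>space M. 1 \<le> ennreal \<Delta> * W x} \<in> sets M" using Wmeas by measurable
  have Bad_le: "emeasure M {x\<in>space M. 1 \<le> ennreal \<Delta> * W x} \<le> ennreal \<Delta>"
  proof -
    have "emeasure M {x\<in>space M. 1 \<le> ennreal \<Delta> * W x} \<le> ennreal \<Delta> * (\<integral>\<^sup>+ x. W x * indicator (space M) x \<partial>M)"
      by (rule nn_integral_Markov_inequality) (use Wmeas in auto)
    also have "(\<integral>\<^sup>+ x. W x * indicator (space M) x \<partial>M) = (\<integral>\<^sup>+ x. W x \<partial>M)"
      by (rule nn_integral_cong) simp
    also have "ennreal \<Delta> * (\<integral>\<^sup>+ x. W x \<partial>M) \<le> ennreal \<Delta> * 1" using EW by (intro mult_left_mono) auto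
    finally show ?thesis by simp
  qed
  define A where "A = {x \<in> space M. ennreal \<Delta> * W x < 1}"
  have A_sets: "A \<in> sets M" unfolding A_def using Wmeas by measurable
  have A_eq: "A = space M - {x\<in>space M. 1 \<le> ennreal \<Delta> * W x}" unfolding A_def by (auto simp: not_le)
  have A_meas: "measure M A \<ge> 1 - \<Delta>"
  proof -
    have "measure M {x\<in>space M. 1 \<le> ennreal \<Delta> * W x} \<le> \<Delta>"
      using Bad_le \<Delta>_range by (simp add: emeasure_eq_measure ennreal_le_iff)
    moreover have "measure M A = 1 - measure M {x\<in>space M. 1 \<le> ennreal \<Delta> * W x}"
      unfolding A_eq by (rule prob_compl[OF Bad_sets])
    ultimately show ?thesis by simp
  qed
  have main: "Vnorm (mat 1 + (\<Sum>s=1..t. w s x *\<^sub>R outer (u s x))) (\<theta>hat x - \<theta>star)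
        \<le> (2 * sqrt (real (d + 2) * ln (1 + (\<Sum>s=1..t. w s x) * R\<^sup>2 / real (d + 2))
                     + 2 * ln (1 / \<Delta>))
           + 2 * l1 * L) / l1" if xA: "x \<in> A" for x
  proof -
    have x: "x \<in> space M" and WA: "ennreal \<Delta> * W x < 1" using xA unfolding A_def by auto
    have w01: "w s x = 0 \<or> w s x = 1" if "s \<in> {1..t}" for s using w_01[OF that x] by auto
    have ww: "(w s x)\<^sup>2 = w s x" if "s \<in> {1..t}" for s using w01[OF that] by auto
    define b where "b i = (\<Sum>s\<in>{1..t}. w s x * (dd s x - p s x) * u s x $ i)" for i
    define q where "q i j = ((if i = j then 1 else 0) + (\<Sum>s\<in>{1..t}. (w s x)\<^sup>2 * u s x $ i * u s x $ j)) / 4" for i j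
    define k0 where "k0 = real CARD('n) * ln (1 / sqrt (8*pi))"
    have Lf_id: "Lf UNIV b y = (\<Sum>s\<in>{1..t}. w s x * (dd s x - p s x) * dotf y (u s x))" for y
    proof -
      have "Lf UNIV b y = (\<Sum>i\<in>UNIV. \<Sum>s\<in>{1..t}. w s x * (dd s x - p s x) * (y i * u s x $ i))"
        unfolding Lf_def b_def by (simp add: sum_distrib_left sum_distrib_right mult_ac)
      also have "\<dots> = (\<Sum>s\<in>{1..t}. \<Sum>i\<in>UNIV. w s x * (dd s x - p s x) * (y i * u s x $ i))"
        by (rule sum.swap)
      also have "\<dots> = (\<Sum>s\<in>{1..t}. w s x * (dd s x - p s x) * dotf y (u s x))"
        unfolding dotf_def by (simp add: sum_distrib_left)
      finally show ?thesis .
    qed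
    have Qf_id: "Qf UNIV q y = ((\<Sum>i\<in>UNIV. (y i)\<^sup>2) + (\<Sum>s\<in>{1..t}. (w s x)\<^sup>2 * (dotf y (u s x))\<^sup>2)) / 4" for y
    proof -
      have "Qf UNIV q y = (\<Sum>i\<in>UNIV. \<Sum>j\<in>UNIV. ((if i = j then 1 else 0) + (\<Sum>s\<in>{1..t}. (w s x)\<^sup>2 * u s x $ i * u s x $ j)) * y i * y j) / 4"
        unfolding Qf_def q_def by (simp add: sum_divide_distrib)
      also have "(\<Sum>i\<in>UNIV. \<Sum>j\<in>UNIV. ((if i = j then 1 else 0) + (\<Sum>s\<in>{1..t}. (w s x)\<^sup>2 * u s x $ i * u s x $ j)) * y i * y j)
          = (\<Sum>i\<in>UNIV. (y i)\<^sup>2) + (\<Sum>s\<in>{1..t}. (w s x)\<^sup>2 * (\<Sum>i\<in>UNIV. u s x $ i * y i)\<^sup>2)"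
        by (rule quad_ident[where y=y and S="{1..t}" and f="\<lambda>s. (w s x)\<^sup>2" and g="\<lambda>s i. u s x $ i"])
      also have "(\<Sum>s\<in>{1..t}. (w s x)\<^sup>2 * (\<Sum>i\<in>UNIV. u s x $ i * y i)\<^sup>2) = (\<Sum>s\<in>{1..t}. (w s x)\<^sup>2 * (dotf y (u s x))\<^sup>2)"
        unfolding dotf_def by (simp add: mult.commute)
      finally show ?thesis .
    qed
    have nd: "normal_density 0 2 z = exp (ln (1 / sqrt (8*pi)) - z\<^sup>2/8)" for z
    proof -
      have "exp (ln (1 / sqrt (8*pi)) - z\<^sup>2/8) = exp (ln (1 / sqrt (8*pi))) * exp (-(z\<^sup>2/8))"
        by (simp only: diff_conv_add_uminus exp_add)
      also have "exp (ln (1 / sqrt (8*pi))) = 1 / sqrt (8*pi)" by simp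
      also have "1 / sqrt (8*pi) * exp (-(z\<^sup>2/8)) = normal_density 0 2 z"
        unfolding normal_density_def by (simp add: mult.commute)
      finally show ?thesis by simp
    qed
    have \<rho>Z: "\<rho> y * Z y x = exp (k0 + Lf UNIV b y - Qf UNIV q y / 2)" for y
    proof -
      have "\<rho> y = exp (\<Sum>i\<in>UNIV. ln (1 / sqrt (8*pi)) - (y i)\<^sup>2/8)"
        unfolding \<rho>_def nd by (simp add: exp_sum)
      also have "(\<Sum>i\<in>UNIV. ln (1 / sqrt (8*pi)) - (y i)\<^sup>2/8) = k0 - (\<Sum>i\<in>UNIV. (y i)\<^sup>2)/8"
        unfolding k0_def by (simp add: sum_subtractf sum_divide_distrib)
      finally have r: "\<rho> y = exp (k0 - (\<Sum>i\<in>UNIV. (y i)\<^sup>2)/8)" .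
      have z: "Z y x = exp ((\<Sum>s\<in>{1..t}. w s x * (dd s x - p s x) * dotf y (u s x)) - (\<Sum>s\<in>{1..t}. (w s x)\<^sup>2 * (dotf y (u s x))\<^sup>2)/8)"
        unfolding Z_def by (simp add: sum_subtractf sum_divide_distrib power_mult_distrib mult_ac)
      show ?thesis unfolding r z Lf_id Qf_id by (simp add: exp_add[symmetric] field_simps)
    qed
    have symq: "\<forall>j\<in>UNIV. \<forall>l\<in>UNIV. q j l = q l j" unfolding q_def by (auto simp: mult_ac)
    have coer: "\<forall>y. 1/4 * (\<Sum>j\<in>UNIV. (y j)\<^sup>2) \<le> Qf UNIV q y"
      unfolding Qf_id by (auto intro!: sum_nonneg)
    define Aa where "Aa i = (\<Sum>s\<in>{1..t}. (w s x)\<^sup>2 * (u s x $ i)\<^sup>2)" for i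
    have Aa0: "Aa i \<ge> 0" for i unfolding Aa_def by (auto intro!: sum_nonneg)
    have qii: "q i i = (1 + Aa i) / 4" for i unfolding q_def Aa_def by (simp add: power2_eq_square mult_ac)
    have prod_eq: "exp k0 * (\<Prod>i\<in>UNIV. sqrt (2*pi / q i i)) = (\<Prod>i\<in>UNIV. 1 / sqrt (1 + Aa i))"
    proof -
      have "exp k0 = (\<Prod>i\<in>(UNIV::'n set). 1 / sqrt (8*pi))"
        unfolding k0_def by (simp add: ln_realpow[symmetric])
      then have "exp k0 * (\<Prod>i\<in>UNIV. sqrt (2*pi / q i i)) = (\<Prod>i\<in>UNIV. 1 / sqrt (8*pi) * sqrt (2*pi / q i i))"
        by (simp only: prod.distrib)
      also have "\<dots> = (\<Prod>i\<in>UNIV. 1 / sqrt (1 + Aa i))"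
      proof (rule prod.cong[OF refl])
        fix i
        have "1 + Aa i > 0" using Aa0[of i] by simp
        then have "2*pi / q i i = (8*pi) / (1 + Aa i)" unfolding qii by (simp add: field_simps)
        then show "1 / sqrt (8*pi) * sqrt (2*pi / q i i) = 1 / sqrt (1 + Aa i)"
          by (simp add: real_sqrt_divide)
      qed
      finally show ?thesis .
    qed
    have key: "Lf UNIV b y0 - Qf UNIV q y0 / 2 < ln (1/\<Delta>) + (\<Sum>i\<in>UNIV. ln (1 + Aa i)) / 2" for y0
    proof -
      have g: "ennreal (exp (k0 + Lf UNIV b y0 - Qf UNIV q y0 / 2) * (\<Prod>j\<in>UNIV. sqrt (2*pi / q j j)))
          \<le> (\<integral>\<^sup>+ y. ennreal (exp (k0 + Lf UNIV b y - Qf UNIV q y / 2)) \<partial>(PiM UNIV (\<lambda>_. lborel)))"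
        by (rule gauss_lb[where I=UNIV and \<alpha>="1/4", OF _ _ symq coer]) simp_all
      also have "\<dots> = W x" unfolding W_def \<Lambda>_def \<rho>Z ..
      finally have "ennreal \<Delta> * ennreal (exp (k0 + Lf UNIV b y0 - Qf UNIV q y0 / 2) * (\<Prod>j\<in>UNIV. sqrt (2*pi / q j j))) < 1"
        using WA by (meson le_less_trans mult_left_mono zero_le)
      then have "ennreal (\<Delta> * (exp (k0 + Lf UNIV b y0 - Qf UNIV q y0 / 2) * (\<Prod>j\<in>UNIV. sqrt (2*pi / q j j)))) < 1"
        using \<Delta>_range by (subst ennreal_mult') auto
      then have r: "\<Delta> * (exp (k0 + Lf UNIV b y0 - Qf UNIV q y0 / 2) * (\<Prod>j\<in>UNIV. sqrt (2*pi / q j j))) < 1"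
        by (simp only: ennreal_less_one_iff)
      have "exp (k0 + Lf UNIV b y0 - Qf UNIV q y0 / 2) * (\<Prod>j\<in>UNIV. sqrt (2*pi / q j j))
          = exp (Lf UNIV b y0 - Qf UNIV q y0 / 2) * (\<Prod>i\<in>UNIV. 1 / sqrt (1 + Aa i))"
        using prod_eq by (simp add: exp_add exp_diff mult_ac)
      with r have r2: "\<Delta> * exp (Lf UNIV b y0 - Qf UNIV q y0 / 2) * (\<Prod>i\<in>UNIV. 1 / sqrt (1 + Aa i)) < 1"
        by (simp add: mult_ac)
      have pos: "0 < 1 / sqrt (1 + Aa i)" for i using Aa0[of i] by simp
      have "ln (\<Delta> * exp (Lf UNIV b y0 - Qf UNIV q y0 / 2) * (\<Prod>i\<in>UNIV. 1 / sqrt (1 + Aa i))) < 0"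
        using r2 \<Delta>_range pos by (intro ln_less_zero) (auto intro!: prod_pos mult_pos_pos)
      moreover have "ln (\<Delta> * exp (Lf UNIV b y0 - Qf UNIV q y0 / 2) * (\<Prod>i\<in>UNIV. 1 / sqrt (1 + Aa i)))
          = ln \<Delta> + (Lf UNIV b y0 - Qf UNIV q y0 / 2) - (\<Sum>i\<in>UNIV. ln (1 + Aa i)) / 2"
      proof -
        have "ln (\<Prod>i\<in>UNIV. 1 / sqrt (1 + Aa i)) = (\<Sum>i\<in>UNIV. ln (1 / sqrt (1 + Aa i)))"
        proof (rule ln_prod)
          fix i show "1 / sqrt (1 + Aa i) \<noteq> 0" using pos[of i] by linarith
        qed simp
        also have "\<dots> = (\<Sum>i\<in>UNIV. - ln (1 + Aa i) / 2)"
        proof (rule sum.cong[OF refl])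
          fix i have "1 + Aa i > 0" using Aa0[of i] by simp
          then show "ln (1 / sqrt (1 + Aa i)) = - ln (1 + Aa i) / 2" by (simp add: ln_div ln_sqrt)
        qed
        also have "\<dots> = - (\<Sum>i\<in>UNIV. ln (1 + Aa i)) / 2" by (simp add: sum_negf sum_divide_distrib)
        finally have lp: "ln (\<Prod>i\<in>UNIV. 1 / sqrt (1 + Aa i)) = - (\<Sum>i\<in>UNIV. ln (1 + Aa i)) / 2" .
        have pp: "(\<Prod>i\<in>UNIV. 1 / sqrt (1 + Aa i)) > 0" by (rule prod_pos) (use pos in auto)
        have "ln (\<Delta> * exp (Lf UNIV b y0 - Qf UNIV q y0 / 2) * (\<Prod>i\<in>UNIV. 1 / sqrt (1 + Aa i)))
            = ln (\<Delta> * exp (Lf UNIV b y0 - Qf UNIV q y0 / 2)) + ln (\<Prod>i\<in>UNIV. 1 / sqrt (1 + Aa i))"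
          by (rule ln_mult_pos) (use \<Delta>_range pp in auto)
        also have "ln (\<Delta> * exp (Lf UNIV b y0 - Qf UNIV q y0 / 2)) = ln \<Delta> + (Lf UNIV b y0 - Qf UNIV q y0 / 2)"
          using \<Delta>_range by (simp add: ln_mult_pos)
        finally show ?thesis using lp by simp
      qed
      ultimately show ?thesis using \<Delta>_range by (simp add: ln_div)
    qed
    define v where "v = \<theta>hat x - \<theta>star"
    define N where "N = (\<Sum>s=1..t. w s x)"
    define C where "C = ln (1/\<Delta>) + n/2 * ln (1 + N * R\<^sup>2 / n)"
    define X where "X = Vnorm (mat 1 + (\<Sum>s=1..t. w s x *\<^sub>R outer (u s x))) v"
    define Sv where "Sv = (\<Sum>s\<in>{1..t}. w s x * (dd s x - \<mu> (u s x \<bullet> \<theta>star)) * (u s x \<bullet> v))"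
    define Q where "Q = (\<Sum>s\<in>{1..t}. w s x * (u s x \<bullet> v)\<^sup>2)"
    define v2 where "v2 = (\<Sum>i\<in>UNIV. (v$i)\<^sup>2)"
    have normsq: "(norm z)\<^sup>2 = (\<Sum>i\<in>UNIV. (z$i)\<^sup>2)" for z :: "real^'n"
      unfolding power2_norm_eq_inner inner_vec_def by (simp add: power2_eq_square)
    have uv: "u s x \<bullet> v = (\<Sum>i\<in>UNIV. u s x $ i * v $ i)" for s unfolding inner_vec_def by simp
    have w0: "w s x \<ge> 0" if "s \<in> {1..t}" for s using w01[OF that] by auto
    have Q0: "Q \<ge> 0" unfolding Q_def using w0 by (auto intro!: sum_nonneg)
    have v20: "v2 \<ge> 0" unfolding v2_def by (auto intro!: sum_nonneg)
    have XX: "v \<bullet> ((mat 1 + (\<Sum>s=1..t. w s x *\<^sub>R outer (u s x))) *v v) = v2 + Q"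
      using Vquad[where v=v and S="{1..t}" and w="\<lambda>s. w s x" and u="\<lambda>s. u s x"]
      unfolding v2_def Q_def uv by simp
    have X0: "X \<ge> 0" unfolding X_def Vnorm_def XX using Q0 v20 by simp
    have Xe: "X\<^sup>2 = v2 + Q" unfolding X_def Vnorm_def XX using Q0 v20 by simp
    have v2L: "v2 \<le> 4*L\<^sup>2"
    proof -
      have "norm v \<le> norm (\<theta>hat x) + norm \<theta>star" unfolding v_def by (rule norm_triangle_ineq4)
      also have "\<dots> \<le> 2*L" using \<Theta>_bound[OF \<theta>hat_in[OF x]] \<Theta>_bound[OF \<theta>star_in] by simp
      finally have "(norm v)\<^sup>2 \<le> (2*L)\<^sup>2" by (intro power_mono) auto
      then show ?thesis unfolding v2_def normsq by (simp add: power_mult_distrib)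
    qed
    have QS: "l1/2 * Q \<le> Sv"
      unfolding Q_def Sv_def v_def
    proof (rule det_part[where \<Theta>=\<Theta> and m=m])
      show "\<And>s. s \<in> {1..t} \<Longrightarrow> 0 \<le> w s x" by (rule w0)
      show "\<And>z. (m has_real_derivative \<mu> z) (at z)" by (rule m_deriv)
      show "\<And>z. \<mu> differentiable at z" by (rule \<mu>_diff)
      show "\<And>s \<theta>. s \<in> {1..t} \<Longrightarrow> \<theta> \<in> \<Theta> \<Longrightarrow> l1 \<le> deriv \<mu> (u s x \<bullet> \<theta>)"
        using \<mu>_deriv x by blast
      show "convex \<Theta>" "\<theta>star \<in> \<Theta>" "\<theta>hat x \<in> \<Theta>" using \<Theta>_convex \<theta>star_in \<theta>hat_in[OF x] by auto
      show "(\<Sum>s\<in>{1..t}. w s x * (m (u s x \<bullet> \<theta>hat x) - dd s x * (u s x \<bullet> \<theta>hat x)))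
          \<le> (\<Sum>s\<in>{1..t}. w s x * (m (u s x \<bullet> \<theta>star) - dd s x * (u s x \<bullet> \<theta>star)))"
        by (rule \<theta>hat_min[OF x \<theta>star_in])
    qed
    have sumAa: "(\<Sum>i\<in>UNIV. Aa i) \<le> N * R\<^sup>2"
    proof -
      have "(\<Sum>i\<in>UNIV. Aa i) = (\<Sum>s\<in>{1..t}. (w s x)\<^sup>2 * (\<Sum>i\<in>UNIV. (u s x $ i)\<^sup>2))"
        unfolding Aa_def by (subst sum.swap) (simp add: sum_distrib_left)
      also have "\<dots> \<le> (\<Sum>s\<in>{1..t}. w s x * R)"
      proof (rule sum_mono)
        fix s assume s: "s \<in> {1..t}"
        have "(\<Sum>i\<in>UNIV. (u s x $ i)\<^sup>2) \<le> R" using u_bound[OF s x] unfolding normsq .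
        then show "(w s x)\<^sup>2 * (\<Sum>i\<in>UNIV. (u s x $ i)\<^sup>2) \<le> w s x * R"
          unfolding ww[OF s] using w0[OF s] by (intro mult_left_mono) auto
      qed
      also have "\<dots> = N * R" unfolding N_def by (simp add: sum_distrib_right)
      also have "\<dots> \<le> N * R\<^sup>2"
      proof (rule mult_left_mono)
        show "R \<le> R\<^sup>2" using R_ge by (simp add: power2_eq_square)
        show "0 \<le> N" unfolding N_def using w0 by (auto intro!: sum_nonneg)
      qed
      finally show ?thesis .
    qed
    have lnb: "(\<Sum>i\<in>UNIV. ln (1 + Aa i)) / 2 \<le> n/2 * ln (1 + N * R\<^sup>2 / n)"
    proof -
      have "(\<Sum>i\<in>UNIV. ln (1 + Aa i)) \<le> n * ln (1 + (\<Sum>i\<in>UNIV. Aa i) / n)"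
        unfolding n_def by (rule sum_ln_le[OF Aa0])
      also have "\<dots> \<le> n * ln (1 + N * R\<^sup>2 / n)"
      proof (rule mult_left_mono)
        have "0 \<le> (\<Sum>i\<in>UNIV. Aa i)" using Aa0 by (auto intro!: sum_nonneg)
        moreover have "(\<Sum>i\<in>UNIV. Aa i) / n \<le> N * R\<^sup>2 / n" using sumAa n_pos by (simp add: divide_right_mono)
        moreover have "0 \<le> (\<Sum>i\<in>UNIV. Aa i) / n" using n_pos \<open>0 \<le> (\<Sum>i\<in>UNIV. Aa i)\<close> by simp
        ultimately show "ln (1 + (\<Sum>i\<in>UNIV. Aa i) / n) \<le> ln (1 + N * R\<^sup>2 / n)"
          by (subst ln_le_cancel_iff) linarith+
      qed (use n_pos in simp)
      finally show ?thesis by simp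
    qed
    have bnd: "a * Sv - a\<^sup>2 * X\<^sup>2 / 8 < C" for a
    proof -
      define y0 where "y0 i = a * v $ i" for i
      have dy: "dotf y0 (u s x) = a * (u s x \<bullet> v)" for s
        unfolding dotf_def y0_def uv by (simp add: sum_distrib_left mult_ac)
      have "Lf UNIV b y0 = a * Sv"
        unfolding Lf_id dy Sv_def p_def by (simp add: sum_distrib_left mult_ac)
      moreover have "Qf UNIV q y0 = a\<^sup>2 * X\<^sup>2 / 4"
      proof -
        have "(\<Sum>s\<in>{1..t}. (w s x)\<^sup>2 * (dotf y0 (u s x))\<^sup>2) = (\<Sum>s\<in>{1..t}. a\<^sup>2 * (w s x * (u s x \<bullet> v)\<^sup>2))"
        proof (rule sum.cong[OF refl])
          fix s assume s: "s \<in> {1..t}"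
          show "(w s x)\<^sup>2 * (dotf y0 (u s x))\<^sup>2 = a\<^sup>2 * (w s x * (u s x \<bullet> v)\<^sup>2)"
            unfolding dy by (simp add: power_mult_distrib ww[OF s])
        qed
        also have "\<dots> = a\<^sup>2 * Q" unfolding Q_def by (simp add: sum_distrib_left)
        finally have "(\<Sum>s\<in>{1..t}. (w s x)\<^sup>2 * (dotf y0 (u s x))\<^sup>2) = a\<^sup>2 * Q" .
        moreover have "(\<Sum>i\<in>UNIV. (y0 i)\<^sup>2) = a\<^sup>2 * v2"
          unfolding y0_def v2_def by (simp add: sum_distrib_left power_mult_distrib)
        ultimately show ?thesis unfolding Qf_id Xe by (simp add: algebra_simps)
      qed
      ultimately have "a * Sv - a\<^sup>2 * X\<^sup>2 / 8 = Lf UNIV b y0 - Qf UNIV q y0 / 2" by simp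
      also have "\<dots> < ln (1/\<Delta>) + (\<Sum>i\<in>UNIV. ln (1 + Aa i)) / 2" by (rule key)
      also have "\<dots> \<le> C" unfolding C_def using lnb by simp
      finally show ?thesis .
    qed
    have "X \<le> (sqrt (2*C) + 2*l1*L)/l1"
      by (rule final_alg[OF X0 Xe v20 v2L L0 l1_pos QS bnd])
    also have "\<dots> \<le> (2 * sqrt (real (d + 2) * ln (1 + (\<Sum>s=1..t. w s x) * R\<^sup>2 / real (d + 2))
                     + 2 * ln (1 / \<Delta>)) + 2 * l1 * L) / l1"
    proof (rule divide_right_mono)
      have e2C: "2*C = real (d + 2) * ln (1 + (\<Sum>s=1..t. w s x) * R\<^sup>2 / real (d + 2)) + 2 * ln (1 / \<Delta>)"
        unfolding C_def N_def n_eq by (simp add: algebra_simps)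
      have C0: "C > 0" using bnd[of 0] by simp
      have "sqrt (2*C) \<le> 2 * sqrt (2*C)" using C0 by simp
      then show "sqrt (2*C) + 2*l1*L \<le> 2 * sqrt (real (d + 2) * ln (1 + (\<Sum>s=1..t. w s x) * R\<^sup>2 / real (d + 2))
                     + 2 * ln (1 / \<Delta>)) + 2 * l1 * L" unfolding e2C by simp
    qed (use l1_pos in simp)
    finally show ?thesis unfolding X_def v_def .
  qed
  show ?thesis using A_sets A_meas main by blast
qed


end
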